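(* Let $\Omega$ be a compact metric space, $c\in C(\Omega\times\Omega)$ such that the optimal transport cost $\mathcal T_c$ is nonnegative and $\mathcal T_c(\mu,\mu)=0$ for all $\mu$. Let $f\colon[0,\infty)\to[0,\infty)$ be a finite strictly convex entropy function and $m$ a non-null finite positive Borel measure on $\Omega$. For $\mu\in\mathcal M_+(\Omega)$ let $\mathcal S(\mu)$ be the unique minimizer of $\nu\mapsto\mathcal T_c(\mu,\nu)+H_{f,m}(\nu)$ over $\mathcal M_+(\Omega)$, and let $\nu=\mathcal S(\mu)$. Let $C_0,C_1$ be two positive constants. Then \[ C_0\leq\frac{d\mu}{dm}\leq C_1\implies C_0\leq\frac{d\nu}{dm}\leq C_1. \]
   Context: $\mathcal M_+(\Omega)$ is the set of finite positive Borel measures. $\mathcal T_c(\mu,\nu)=\inf_{\pi\in\Pi(\mu,\nu)}\int c\,d\pi$ over positive measures $\pi$ on $\Omega\times\Omega$ with marginals $\mu,\nu$ ($+\infty$ if masses differ). An entropy function is a proper convex lower semicontinuous $f\colon[0,\infty)\to[0,\infty]$ with $f(s)/s\to\infty$. $H_{f,m}(\nu)=\int f(d\nu/dm)\,dm$ if $\nu\geq0$ and $\nu\ll m$, and $+\infty$ otherwise. Existence and uniqueness of the minimizer $\mathcal S(\mu)$ holds in this setting. The density conditions are understood $m$-a.e. (in particular the hypothesis includes $\mu\ll m$). *)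

theory Defs
  imports "HOL-Analysis.Analysis"
begin

definition Mplus :: "'a::topological_space measure set" where
  "Mplus = {M. sets M = sets borel \<and> finite_measure M}"

definition couplings :: "'a::metric_space measure \<Rightarrow> 'a measure \<Rightarrow> ('a \<times> 'a) measure set" where
  "couplings \<mu> \<nu> = {\<pi>. sets \<pi> = sets borel \<and> finite_measure \<pi> \<and>
      distr \<pi> borel fst = \<mu> \<and> distr \<pi> borel snd = \<nu>}"

text \<open>Optimal transport cost; the infimum over the empty set is +\<infinity>.\<close>
definition OT_cost :: "('a::metric_space \<times> 'a \<Rightarrow> real) \<Rightarrow> 'a measure \<Rightarrow> 'a measure \<Rightarrow> ereal" where
  "OT_cost c \<mu> \<nu> = (INF \<pi> \<in> couplings \<mu> \<nu>. ereal (integral\<^sup>L \<pi> c))"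

definition strict_convex_on :: "real set \<Rightarrow> (real \<Rightarrow> real) \<Rightarrow> bool" where
  "strict_convex_on S f \<longleftrightarrow> (\<forall>x\<in>S. \<forall>y\<in>S. \<forall>t. x \<noteq> y \<and> 0 < t \<and> t < 1 \<longrightarrow>
      f ((1 - t) * x + t * y) < (1 - t) * f x + t * f y)"

definition lsc_nonneg :: "(real \<Rightarrow> real) \<Rightarrow> bool" where
  "lsc_nonneg f \<longleftrightarrow> (\<forall>s\<ge>0. \<forall>e>0. \<exists>d>0. \<forall>t\<ge>0. \<bar>t - s\<bar> < d \<longrightarrow> f s - e < f t)"

definition finite_entropy_function :: "(real \<Rightarrow> real) \<Rightarrow> bool" where
  "finite_entropy_function f \<longleftrightarrow> (\<forall>s\<ge>0. 0 \<le> f s) \<and> convex_on {0..} f \<and> lsc_nonneg f \<and>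
      filterlim (\<lambda>s. f s / s) at_top at_top"

definition rel_entropy :: "(real \<Rightarrow> real) \<Rightarrow> 'a measure \<Rightarrow> 'a measure \<Rightarrow> ennreal" where
  "rel_entropy f m \<nu> = (if absolutely_continuous m \<nu>
      then (\<integral>\<^sup>+ x. ennreal (f (enn2real (RN_deriv m \<nu> x))) \<partial>m) else \<infinity>)"

end

theory Submission
  imports Defs
begin


definition sl :: "(real \<Rightarrow> real) \<Rightarrow> real \<Rightarrow> real \<Rightarrow> real" where
  "sl f a b = (f b - f a) / (b - a)"

lemma chord_mono:
  assumes cvx: "convex_on {0..} f" and "0 \<le> a" "a < b" "a \<le> c" "c < d" "b \<le> d"
  shows "sl f a b \<le> sl f c d"
proof -
  have 1: "sl f a b \<le> sl f a d"
  proof (cases "b < d")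
    case True
    from convex_on_slope_le(1)[OF cvx, of a d b] True assms show ?thesis
      by (simp add: sl_def) (smt (verit, ccfv_threshold) minus_divide_divide)
  qed (use assms in auto)
  have 2: "sl f a d \<le> sl f c d"
  proof (cases "a < c")
    case True
    from convex_on_slope_le(2)[OF cvx, of a d c] True assms show ?thesis
      by (simp add: sl_def) (smt (verit, ccfv_threshold) minus_divide_divide)
  qed (use assms in auto)
  from 1 2 show ?thesis by linarith
qed

lemma strict_slope:
  assumes sc: "strict_convex_on {0..} f" and "0 \<le> x" "x < y" "y < z"
  shows "sl f x y < sl f y z"
proof -
  define \<theta> where "\<theta> = (y - x) / (z - x)"
  have th: "0 < \<theta>" "\<theta> < 1" using assms by (auto simp: \<theta>_def field_simps)
  have "\<theta> * (z - x) = y - x" using assms by (simp add: \<theta>_def)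
  then have y: "(1 - \<theta>) * x + \<theta> * z = y" by (simp add: algebra_simps)
  have "f y < (1 - \<theta>) * f x + \<theta> * f z"
    using sc[unfolded strict_convex_on_def, rule_format, of x z \<theta>] assms th y by auto
  then have "(z - x) * f y < (z - x) * ((1 - \<theta>) * f x + \<theta> * f z)"
    using assms by (intro mult_strict_left_mono) auto
  also have "\<dots> = (z - x - \<theta> * (z - x)) * f x + (\<theta> * (z - x)) * f z"
    by (simp add: algebra_simps)
  also have "\<dots> = (z - y) * f x + (y - x) * f z"
    using \<open>\<theta> * (z - x) = y - x\<close> by simp
  finally have "(z - x) * f y < (z - y) * f x + (y - x) * f z" .
  then show ?thesis using assms by (simp add: sl_def field_simps)
qed

lemma inc_bound:
  assumes cvx: "convex_on {0..} f" and "0 \<le> r" "r \<le> L" "0 \<le> D" "D \<le> e" "0 < e"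
  shows "f (r + D) - f r \<le> sl f L (L + e) * D"
proof (cases "D = 0")
  case False
  then have "sl f r (r + D) \<le> sl f L (L + e)"
    using assms by (intro chord_mono[OF cvx]) auto
  then show ?thesis using False assms by (simp add: sl_def field_simps)
qed simp

lemma dec_bound:
  assumes cvx: "convex_on {0..} f" and "0 < L" "0 < t" "t < 1" "L \<le> r" "0 \<le> D" "D \<le> t * r"
  shows "f (r - D) - f r \<le> - (sl f ((1 - t) * L) L * D)"
proof (cases "D = 0")
  case False
  have "(1 - t) * L \<le> (1 - t) * r" using assms by (intro mult_left_mono) auto
  then have "sl f ((1 - t) * L) L \<le> sl f (r - D) r"
    using assms False by (intro chord_mono[OF cvx]) (auto simp: algebra_simps)
  then show ?thesis using False assms by (simp add: sl_def field_simps)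
qed simp

lemma grid:
  assumes cvx: "convex_on {0..} f" and pq: "0 < p" "p < q" and C: "0 < C" and t0: "0 < t0"
    and eta: "0 < \<eta>"
  shows "\<exists>L t. p < L \<and> L + t * C \<le> q \<and> p \<le> (1 - t) * L \<and> 0 < t \<and> t \<le> t0 \<and> t < 1 \<and>
           sl f L (L + t * C) - sl f ((1 - t) * L) L \<le> \<eta>"
proof (rule ccontr)
  assume contra: "\<not> ?thesis"
  define M where "M = sl f q (q + 1) - sl f 0 p"
  obtain N :: nat where N: "M / \<eta> < real N" using reals_Archimedean2 by blast
  have N1: "N \<ge> 1"
  proof (rule ccontr)
    assume "\<not> N \<ge> 1"
    then have "N = 0" by simp
    with N have "M < 0" using eta by (simp add: divide_less_0_iff)
    moreover have "sl f 0 p \<le> sl f q (q + 1)" using pq by (intro chord_mono[OF cvx]) auto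
    ultimately show False unfolding M_def by simp
  qed
  define h where "h = (q - p) / (real N + 1)"
  have h: "0 < h" using pq by (simp add: h_def)
  define t where "t = min (t0 / 2) (h / (C + q))"
  have Cq: "0 < C + q" using C pq by simp
  have "t \<le> h / (C + q)" by (simp add: t_def)
  then have "t * (C + q) \<le> h / (C + q) * (C + q)" using Cq by (intro mult_right_mono) auto
  then have t3: "t * (C + q) \<le> h" using Cq by simp
  have "t \<le> t0 / 2" unfolding t_def by (rule min.cobounded1)
  moreover have "0 < t" unfolding t_def using t0 h Cq by simp
  ultimately have t: "0 < t" "t \<le> t0" "t * (C + q) \<le> h" using t0 t3 by auto
  have hq: "h \<le> q - p" using pq N1 by (simp add: h_def field_simps)
  have t1: "t < 1"
  proof -
    have "t * (C + q) \<le> h" by fact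
    also have "h < C + q" using hq C pq by linarith
    finally have "t * (C + q) < 1 * (C + q)" by simp
    then show ?thesis using Cq mult_less_cancel_right_pos by blast
  qed
  define L where "L i = p + (real i + 1) * h" for i :: nat
  define k where "k i = sl f (L i) (L i + t * C)" for i
  define s where "s i = sl f ((1 - t) * L i) (L i)" for i
  have Lq: "L i + h \<le> q" if "i < N" for i
  proof -
    have "(real i + 2) * h \<le> (real N + 1) * h" using that h by (intro mult_right_mono) auto
    also have "\<dots> = q - p" using h_def by simp
    finally show ?thesis by (simp add: L_def algebra_simps)
  qed
  have Lp: "p < L i" for i using h by (simp add: L_def add_pos_pos)
  have Lpos: "0 < L i" for i using Lp[of i] pq by linarith
  have tC: "t * C \<le> h"
  proof -
    have "t * C \<le> t * (C + q)" using t pq by (intro mult_left_mono) auto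
    then show ?thesis using t by linarith
  qed
  have tq: "t * q \<le> h"
  proof -
    have "t * q \<le> t * (C + q)" using t C by (intro mult_left_mono) auto
    then show ?thesis using t by linarith
  qed
  have good: "p < L i \<and> L i + t * C \<le> q \<and> p \<le> (1 - t) * L i" if "i < N" for i
  proof -
    have "t * C \<le> h" by (rule tC)
    moreover have "t * L i \<le> h"
    proof -
      have "t * L i \<le> t * q" using Lq[OF that] h t by (intro mult_left_mono) auto
      also have "\<dots> \<le> h" by (rule tq)
      finally show ?thesis .
    qed
    moreover have "p + h \<le> L i"
    proof -
      have "0 \<le> real i * h" using h by simp
      then show ?thesis by (simp add: L_def algebra_simps)
    qed
    moreover have "(1 - t) * L i = L i - t * L i" by (simp add: algebra_simps)
    ultimately show ?thesis using Lp[of i] Lq[OF that] by linarith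
  qed
  have big: "k i - s i > \<eta>" if "i < N" for i
  proof (rule ccontr)
    assume "\<not> k i - s i > \<eta>"
    then have "p < L i \<and> L i + t * C \<le> q \<and> p \<le> (1 - t) * L i \<and> 0 < t \<and> t \<le> t0 \<and> t < 1 \<and>
           sl f (L i) (L i + t * C) - sl f ((1 - t) * L i) (L i) \<le> \<eta>"
      using good[OF that] t t1 unfolding k_def s_def by linarith
    then show False using contra by blast
  qed
  have step: "s (Suc i) \<ge> k i" if "i < N" for i
    unfolding k_def s_def
  proof (rule chord_mono[OF cvx])
    have "t * C \<le> h" by (rule tC)
    moreover have "t * L (Suc i) \<le> t * (C + q)"
    proof -
      have "L (Suc i) \<le> q" using Lq[OF that] h by (simp add: L_def algebra_simps)
      then show ?thesis using t C by (intro mult_left_mono) auto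
    qed
    moreover have "L (Suc i) = L i + h" by (simp add: L_def algebra_simps)
    moreover have "(1 - t) * L (Suc i) = L (Suc i) - t * L (Suc i)" by (simp add: algebra_simps)
    moreover have "t * (C + q) \<le> h" by (rule t(3))
    ultimately show "L i \<le> (1 - t) * L (Suc i)" "L i + t * C \<le> L (Suc i)"
      by linarith+
    show "0 \<le> L i" using Lpos[of i] by simp
    show "L i < L i + t * C" using t C by simp
    show "(1 - t) * L (Suc i) < L (Suc i)" using Lpos t by auto
  qed
  have ind: "s i \<ge> s 0 + real i * \<eta>" if "i < N" for i
    using that
  proof (induction i)
    case (Suc i)
    then have "s i \<ge> s 0 + real i * \<eta>" by simp
    moreover have "s (Suc i) \<ge> k i" using step Suc by simp
    moreover have "k i - s i > \<eta>" using big Suc by simp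
    ultimately show ?case by (simp add: algebra_simps)
  qed simp
  obtain j where j: "N = Suc j" using N1 by (cases N) auto
  have "k j > s 0 + real N * \<eta>" using ind[of j] big[of j] j by (simp add: algebra_simps)
  moreover have "k j \<le> sl f q (q + 1)"
    unfolding k_def
  proof (rule chord_mono[OF cvx])
    have "L j + t * C \<le> q" using good[of j] j by simp
    moreover have "0 < t * C" using t C by simp
    ultimately show "0 \<le> L j" "L j < L j + t * C" "L j \<le> q" "q < q + 1" "L j + t * C \<le> q + 1"
      using Lpos[of j] by linarith+
  qed
  moreover have "s 0 \<ge> sl f 0 p"
    unfolding s_def
  proof (rule chord_mono[OF cvx])
    have g: "p < L 0" "p \<le> (1 - t) * L 0" using good[of 0] j by auto
    have "t * L 0 > 0" using t Lpos by simp
    moreover have "(1 - t) * L 0 = L 0 - t * L 0" by (simp add: algebra_simps)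
    ultimately show "0 \<le> (0::real)" "0 < p" "0 \<le> (1 - t) * L 0" "(1 - t) * L 0 < L 0" "p \<le> L 0"
      using g pq by linarith+
  qed
  moreover have "real N * \<eta> > M" using N eta by (simp add: field_simps)
  ultimately show False unfolding M_def by linarith
qed

lemma upper_pkg:
  assumes cvx: "convex_on {0..} f" and sc: "strict_convex_on {0..} f"
    and C1: "0 < C1" "C1 < l3"
  shows "\<exists>\<Gamma>>0. \<forall>\<eta>>0. \<exists>L t k s. C1 < L \<and> L < l3 \<and> 0 < t \<and> t < 1 \<and> k - s \<le> \<eta> \<and>
    (\<forall>r D. 0 \<le> r \<longrightarrow> r \<le> L \<longrightarrow> 0 \<le> D \<longrightarrow> D \<le> t * C1 \<longrightarrow> f (r + D) - f r \<le> k * D) \<and>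
    (\<forall>r D. L \<le> r \<longrightarrow> 0 \<le> D \<longrightarrow> D \<le> t * r \<longrightarrow> f (r - D) - f r \<le> - (s * D)) \<and>
    (\<forall>r D. l3 \<le> r \<longrightarrow> 0 \<le> D \<longrightarrow> D \<le> t * r \<longrightarrow> f (r - D) - f r \<le> - ((k + \<Gamma>) * D))"
proof -
  define d where "d = (l3 - C1) / 3"
  have d: "0 < d" using C1 by (simp add: d_def)
  define q1 where "q1 = C1 + d"
  define q2 where "q2 = C1 + 2 * d"
  have d3: "3 * d = l3 - C1" by (simp add: d_def)
  have q: "C1 < q1" "q1 < q2" "q2 < l3" using d d3 by (auto simp: q1_def q2_def)
  define \<Gamma> where "\<Gamma> = sl f q2 l3 - sl f q1 q2"
  have \<Gamma>: "0 < \<Gamma>" unfolding \<Gamma>_def using strict_slope[OF sc, of q1 q2 l3] q C1 by simp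
  show ?thesis
  proof (rule exI[of _ \<Gamma>], intro conjI allI impI \<Gamma>)
    fix \<eta> :: real assume eta: "0 < \<eta>"
    define t0 where "t0 = (l3 - q2) / l3"
    have t0: "0 < t0" using q C1 by (simp add: t0_def)
    obtain L t where Lt: "C1 < L" "L + t * C1 \<le> q1" "C1 \<le> (1 - t) * L" "0 < t" "t \<le> t0" "t < 1"
       "sl f L (L + t * C1) - sl f ((1 - t) * L) L \<le> \<eta>"
      using grid[OF cvx _ _ C1(1) t0 eta, of C1 q1] q C1 by blast
    define k where "k = sl f L (L + t * C1)"
    define s where "s = sl f ((1 - t) * L) L"
    have tC: "0 < t * C1" using Lt C1 by simp
    have Lpos: "0 < L" using Lt C1 by simp
    have "L \<le> q1" using Lt(2) tC by linarith
    have kle: "k \<le> sl f q1 q2" unfolding k_def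
      using Lt tC q C1 \<open>L \<le> q1\<close> by (intro chord_mono[OF cvx]) auto
    have "t * l3 \<le> t0 * l3" using Lt C1 q by (intro mult_right_mono) auto
    also have "\<dots> = l3 - q2" using C1 q by (simp add: t0_def)
    finally have tl3: "q2 \<le> (1 - t) * l3" by (simp add: algebra_simps)
    have Sge: "sl f q2 l3 \<le> sl f ((1 - t) * l3) l3"
    proof (rule chord_mono[OF cvx])
      have "0 < t * l3" using Lt C1 q by simp
      then show "(1 - t) * l3 < l3" by (simp add: algebra_simps)
    qed (use q C1 tl3 in auto)
    show "\<exists>L t k s. C1 < L \<and> L < l3 \<and> 0 < t \<and> t < 1 \<and> k - s \<le> \<eta> \<and>
    (\<forall>r D. 0 \<le> r \<longrightarrow> r \<le> L \<longrightarrow> 0 \<le> D \<longrightarrow> D \<le> t * C1 \<longrightarrow> f (r + D) - f r \<le> k * D) \<and>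
    (\<forall>r D. L \<le> r \<longrightarrow> 0 \<le> D \<longrightarrow> D \<le> t * r \<longrightarrow> f (r - D) - f r \<le> - (s * D)) \<and>
    (\<forall>r D. l3 \<le> r \<longrightarrow> 0 \<le> D \<longrightarrow> D \<le> t * r \<longrightarrow> f (r - D) - f r \<le> - ((k + \<Gamma>) * D))"
    proof (rule exI[of _ L], rule exI[of _ t], rule exI[of _ k], rule exI[of _ s], intro conjI allI impI)
      show "C1 < L" "0 < t" "t < 1" using Lt by auto
      show "L < l3" using Lt tC q by linarith
      show "k - s \<le> \<eta>" using Lt by (simp add: k_def s_def)
      fix r D :: real
      { assume "0 \<le> r" "r \<le> L" "0 \<le> D" "D \<le> t * C1"
        then show "f (r + D) - f r \<le> k * D"
          unfolding k_def using inc_bound[OF cvx, of r L D "t * C1"] tC by simp }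
      { assume "L \<le> r" "0 \<le> D" "D \<le> t * r"
        then show "f (r - D) - f r \<le> - (s * D)"
          unfolding s_def using dec_bound[OF cvx Lpos, of t r D] Lt by simp }
      { assume a: "l3 \<le> r" "0 \<le> D" "D \<le> t * r"
        then have "f (r - D) - f r \<le> - (sl f ((1 - t) * l3) l3 * D)"
          using dec_bound[OF cvx, of l3 t r D] Lt q C1 by simp
        moreover have "(k + \<Gamma>) * D \<le> sl f ((1 - t) * l3) l3 * D"
          using a kle Sge by (intro mult_right_mono) (auto simp: \<Gamma>_def)
        ultimately show "f (r - D) - f r \<le> - ((k + \<Gamma>) * D)" by linarith }
    qed
  qed
qed

lemma lower_pkg:
  assumes cvx: "convex_on {0..} f" and sc: "strict_convex_on {0..} f"
    and l3: "0 < l3" "l3 < C0" and C1: "0 < C1"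
  shows "\<exists>\<Gamma>>0. \<forall>\<eta>>0. \<exists>L t k s. l3 < L \<and> L < C0 \<and> 0 < t \<and> t < 1 \<and> k - s \<le> \<eta> \<and>
    (\<forall>r D. 0 \<le> r \<longrightarrow> r \<le> L \<longrightarrow> 0 \<le> D \<longrightarrow> D \<le> t * C1 \<longrightarrow> f (r + D) - f r \<le> k * D) \<and>
    (\<forall>r D. L \<le> r \<longrightarrow> 0 \<le> D \<longrightarrow> D \<le> t * r \<longrightarrow> f (r - D) - f r \<le> - (s * D)) \<and>
    (\<forall>r D. 0 \<le> r \<longrightarrow> r \<le> l3 \<longrightarrow> 0 \<le> D \<longrightarrow> D \<le> t * C1 \<longrightarrow> f (r + D) - f r \<le> (s - \<Gamma>) * D)"
proof -
  define d where "d = (C0 - l3) / 3"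
  have d: "0 < d" using l3 by (simp add: d_def)
  define q2 where "q2 = l3 + d"
  define q3 where "q3 = l3 + 2 * d"
  have d3: "3 * d = C0 - l3" by (simp add: d_def)
  have q: "l3 < q2" "q2 < q3" "q3 < C0" using d d3 by (auto simp: q3_def q2_def)
  define \<Gamma> where "\<Gamma> = sl f q2 q3 - sl f l3 q2"
  have \<Gamma>: "0 < \<Gamma>" unfolding \<Gamma>_def using strict_slope[OF sc, of l3 q2 q3] q l3 by simp
  show ?thesis
  proof (rule exI[of _ \<Gamma>], intro conjI allI impI \<Gamma>)
    fix \<eta> :: real assume eta: "0 < \<eta>"
    define t0 where "t0 = d / C1"
    have t0: "0 < t0" using d C1 by (simp add: t0_def)
    obtain L t where Lt: "q3 < L" "L + t * C1 \<le> C0" "q3 \<le> (1 - t) * L" "0 < t" "t \<le> t0" "t < 1"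
       "sl f L (L + t * C1) - sl f ((1 - t) * L) L \<le> \<eta>"
      using grid[OF cvx _ _ C1 t0 eta, of q3 C0] q l3 by fastforce
    define k where "k = sl f L (L + t * C1)"
    define s where "s = sl f ((1 - t) * L) L"
    have tC: "0 < t * C1" using Lt C1 by simp
    have Lpos: "0 < L" using Lt q l3 by simp
    have "t * C1 \<le> t0 * C1" using Lt C1 by (intro mult_right_mono) auto
    also have "\<dots> = d" using C1 by (simp add: t0_def)
    finally have tCd: "t * C1 \<le> d" .
    have Kle: "sl f l3 (l3 + t * C1) \<le> sl f l3 q2"
      using tC tCd q l3 by (intro chord_mono[OF cvx]) (auto simp: q2_def)
    have sge: "sl f q2 q3 \<le> s" unfolding s_def
    proof (rule chord_mono[OF cvx])
      have "0 < t * L" using Lt Lpos by simp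
      then show "(1 - t) * L < L" by (simp add: algebra_simps)
    qed (use q l3 Lt in auto)
    show "\<exists>L t k s. l3 < L \<and> L < C0 \<and> 0 < t \<and> t < 1 \<and> k - s \<le> \<eta> \<and>
    (\<forall>r D. 0 \<le> r \<longrightarrow> r \<le> L \<longrightarrow> 0 \<le> D \<longrightarrow> D \<le> t * C1 \<longrightarrow> f (r + D) - f r \<le> k * D) \<and>
    (\<forall>r D. L \<le> r \<longrightarrow> 0 \<le> D \<longrightarrow> D \<le> t * r \<longrightarrow> f (r - D) - f r \<le> - (s * D)) \<and>
    (\<forall>r D. 0 \<le> r \<longrightarrow> r \<le> l3 \<longrightarrow> 0 \<le> D \<longrightarrow> D \<le> t * C1 \<longrightarrow> f (r + D) - f r \<le> (s - \<Gamma>) * D)"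
    proof (rule exI[of _ L], rule exI[of _ t], rule exI[of _ k], rule exI[of _ s], intro conjI allI impI)
      show "l3 < L" using Lt q by linarith
      show "0 < t" using Lt by auto
      show "t < 1" using Lt by auto
      show "L < C0" using Lt tC by linarith
      show "k - s \<le> \<eta>" using Lt by (simp add: k_def s_def)
      fix r D :: real
      { assume "0 \<le> r" "r \<le> L" "0 \<le> D" "D \<le> t * C1"
        then show "f (r + D) - f r \<le> k * D"
          unfolding k_def using inc_bound[OF cvx, of r L D "t * C1"] tC by simp }
      { assume "L \<le> r" "0 \<le> D" "D \<le> t * r"
        then show "f (r - D) - f r \<le> - (s * D)"
          unfolding s_def using dec_bound[OF cvx Lpos, of t r D] Lt by simp }
      { assume a: "0 \<le> r" "r \<le> l3" "0 \<le> D" "D \<le> t * C1"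
        then have "f (r + D) - f r \<le> sl f l3 (l3 + t * C1) * D"
          using inc_bound[OF cvx, of r l3 D "t * C1"] tC by simp
        moreover have "sl f l3 (l3 + t * C1) * D \<le> (s - \<Gamma>) * D"
          using a Kle sge by (intro mult_right_mono) (auto simp: \<Gamma>_def)
        ultimately show "f (r + D) - f r \<le> (s - \<Gamma>) * D" by linarith }
    qed
  qed
qed



definition msum :: "'a measure \<Rightarrow> 'a measure \<Rightarrow> 'a measure" where
  "msum M N = measure_of (space M) (sets M) (\<lambda>A. emeasure M A + emeasure N A)"

lemma sets_msum[simp, measurable_cong]: "sets (msum M N) = sets M"
  and space_msum[simp]: "space (msum M N) = space M"
  by (auto simp: msum_def)

lemma emeasure_msum:
  assumes sN: "sets N = sets M" and A: "A \<in> sets M"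
  shows "emeasure (msum M N) A = emeasure M A + emeasure N A"
  unfolding msum_def
proof (rule emeasure_measure_of_sigma)
  show "sigma_algebra (space M) (sets M)" ..
  show "positive (sets M) (\<lambda>A. emeasure M A + emeasure N A)"
    by (simp add: positive_def sN[symmetric])
  show "countably_additive (sets M) (\<lambda>A. emeasure M A + emeasure N A)"
  proof (rule countably_additiveI)
    fix A :: "nat \<Rightarrow> _" assume A: "range A \<subseteq> sets M" "disjoint_family A"
    then have "(\<Sum>i. emeasure M (A i)) = emeasure M (\<Union>i. A i)"
      "(\<Sum>i. emeasure N (A i)) = emeasure N (\<Union>i. A i)"
      by (simp_all add: suminf_emeasure sN)
    then show "(\<Sum>i. emeasure M (A i) + emeasure N (A i)) = emeasure M (\<Union>i. A i) + emeasure N (\<Union>i. A i)"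
      by (simp add: suminf_add[symmetric])
  qed
qed fact

lemma nn_integral_msum:
  assumes sN: "sets N = sets M" and g: "g \<in> borel_measurable M"
  shows "(\<integral>\<^sup>+x. g x \<partial>msum M N) = (\<integral>\<^sup>+x. g x \<partial>M) + (\<integral>\<^sup>+x. g x \<partial>N)"
  using g
proof (induction rule: borel_measurable_induct)
  case (cong f g)
  have "space N = space M" using sets_eq_imp_space_eq[OF sN] .
  then show ?case using cong
    by (subst (1 2 3) nn_integral_cong[of _ f g]) (auto)
next
  case (set A)
  then show ?case using sN by (simp add: emeasure_msum)
next
  case (mult u c)
  have mN: "u \<in> borel_measurable N" using mult sN by (simp cong: measurable_cong_sets)
  from mult show ?case
    by (simp add: nn_integral_cmult mN distrib_left cong: measurable_cong_sets)
next
  case (add u v)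
  have mN: "u \<in> borel_measurable N" "v \<in> borel_measurable N" using add sN by (simp_all cong: measurable_cong_sets)
  from add show ?case
    by (simp add: nn_integral_add mN algebra_simps cong: measurable_cong_sets)
next
  case (seq U)
  have mN: "U i \<in> borel_measurable N" for i using seq sN by (simp cong: measurable_cong_sets)
  have eqS: "(SUP i. U i) = (\<lambda>x. SUP i. U i x)" by (simp add: fun_eq_iff SUP_apply image_comp)
  have mS: "U i \<in> borel_measurable (msum M N)" for i using seq by (simp cong: measurable_cong_sets)
  have "(\<integral>\<^sup>+x. (SUP i. U i x) \<partial>msum M N) = (SUP i. \<integral>\<^sup>+x. U i x \<partial>msum M N)"
    using seq mS by (intro nn_integral_monotone_convergence_SUP) auto
  also have "\<dots> = (SUP i. (\<integral>\<^sup>+x. U i x \<partial>M) + (\<integral>\<^sup>+x. U i x \<partial>N))" using seq by simp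
  also have "\<dots> = (SUP i. (\<integral>\<^sup>+x. U i x \<partial>M)) + (SUP i. (\<integral>\<^sup>+x. U i x \<partial>N))"
  proof (rule ennreal_SUP_add)
    show "incseq (\<lambda>i. \<integral>\<^sup>+x. U i x \<partial>M)" "incseq (\<lambda>i. \<integral>\<^sup>+x. U i x \<partial>N)"
      using seq by (auto simp: incseq_def le_fun_def intro!: nn_integral_mono)
  qed
  also have "\<dots> = (\<integral>\<^sup>+x. (SUP i. U i x) \<partial>M) + (\<integral>\<^sup>+x. (SUP i. U i x) \<partial>N)"
    using seq mN by (simp add: nn_integral_monotone_convergence_SUP)
  finally show ?case unfolding eqS .
qed

lemma distr_msum:
  assumes sN: "sets N = sets M" and g: "g \<in> measurable M K"
  shows "distr (msum M N) K g = msum (distr M K g) (distr N K g)"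
proof (rule measure_eqI)
  show "sets (distr (msum M N) K g) = sets (msum (distr M K g) (distr N K g))" by simp
  fix A assume "A \<in> sets (distr (msum M N) K g)"
  then have A: "A \<in> sets K" by simp
  have gN: "g \<in> measurable N K" using g sN by (simp cong: measurable_cong_sets)
  have "space N = space M" using sets_eq_imp_space_eq[OF sN] .
  then show "emeasure (distr (msum M N) K g) A = emeasure (msum (distr M K g) (distr N K g)) A"
    using A g gN sN by (simp add: emeasure_distr emeasure_msum measurable_sets cong: measurable_cong_sets)
qed

lemma finite_measure_msum:
  assumes "finite_measure M" "finite_measure N" "sets N = sets M"
  shows "finite_measure (msum M N)"
proof (rule finite_measureI)
  have "emeasure (msum M N) (space (msum M N)) = emeasure M (space M) + emeasure N (space M)"
    using assms by (simp add: emeasure_msum)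
  also have "space M = space N" using sets_eq_imp_space_eq[OF assms(3)] by simp
  finally show "emeasure (msum M N) (space (msum M N)) \<noteq> \<infinity>"
    using assms by (simp add: finite_measure.emeasure_finite)
qed

lemma density_add_msum:
  assumes f: "f \<in> borel_measurable M" and g: "g \<in> borel_measurable M"
  shows "density M (\<lambda>x. f x + g x) = msum (density M f) (density M g)"
proof (rule measure_eqI)
  show "sets (density M (\<lambda>x. f x + g x)) = sets (msum (density M f) (density M g))" by simp
  fix A assume "A \<in> sets (density M (\<lambda>x. f x + g x))"
  then have A: "A \<in> sets M" by simp
  have "emeasure (density M (\<lambda>x. f x + g x)) A = (\<integral>\<^sup>+x. (f x + g x) * indicator A x \<partial>M)"
    using f g A by (simp add: emeasure_density)
  also have "\<dots> = (\<integral>\<^sup>+x. f x * indicator A x + g x * indicator A x \<partial>M)"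
    by (simp add: distrib_right)
  also have "\<dots> = (\<integral>\<^sup>+x. f x * indicator A x \<partial>M) + (\<integral>\<^sup>+x. g x * indicator A x \<partial>M)"
    using f g A by (intro nn_integral_add) auto
  finally show "emeasure (density M (\<lambda>x. f x + g x)) A = emeasure (msum (density M f) (density M g)) A"
    using f g A by (simp add: emeasure_msum emeasure_density)
qed

lemma integral_msum:
  fixes g :: "_ \<Rightarrow> real"
  assumes sN: "sets N = sets M" and iM: "integrable M g" and iN: "integrable N g"
  shows "integrable (msum M N) g" "integral\<^sup>L (msum M N) g = integral\<^sup>L M g + integral\<^sup>L N g"
proof -
  have gM: "g \<in> borel_measurable M" using iM by simp
  have nM: "(\<integral>\<^sup>+x. ennreal (norm (g x)) \<partial>M) < \<infinity>" "(\<integral>\<^sup>+x. ennreal (norm (g x)) \<partial>N) < \<infinity>"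
    using iM iN by (simp_all add: integrable_iff_bounded)
  show i: "integrable (msum M N) g"
    unfolding integrable_iff_bounded using gM nM sN
    by (simp add: nn_integral_msum cong: measurable_cong_sets)
  have p: "(\<integral>\<^sup>+x. ennreal (g x) \<partial>M) < \<infinity>" "(\<integral>\<^sup>+x. ennreal (g x) \<partial>N) < \<infinity>"
    "(\<integral>\<^sup>+x. ennreal (- g x) \<partial>M) < \<infinity>" "(\<integral>\<^sup>+x. ennreal (- g x) \<partial>N) < \<infinity>"
    using nM(1) apply (rule le_less_trans[rotated]) apply (rule nn_integral_mono) apply simp
    using nM(2) apply (rule le_less_trans[rotated]) apply (rule nn_integral_mono) apply simp
    using nM(1) apply (rule le_less_trans[rotated]) apply (rule nn_integral_mono) apply simp
    using nM(2) apply (rule le_less_trans[rotated]) apply (rule nn_integral_mono) apply simp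
    done
  show "integral\<^sup>L (msum M N) g = integral\<^sup>L M g + integral\<^sup>L N g"
    using i iM iN gM sN p
    by (simp add: real_lebesgue_integral_def nn_integral_msum enn2real_plus less_top[symmetric])
qed



lemma finite_measure_density_le1:
  assumes "finite_measure M" and w: "w \<in> borel_measurable M" and "\<And>x. w x \<le> 1"
  shows "finite_measure (density M (\<lambda>x. ennreal (w x)))"
proof (rule finite_measureI)
  have "emeasure (density M (\<lambda>x. ennreal (w x))) (space M) = (\<integral>\<^sup>+x. ennreal (w x) * indicator (space M) x \<partial>M)"
    using w by (simp add: emeasure_density)
  also have "\<dots> \<le> (\<integral>\<^sup>+x. 1 \<partial>M)"
    using assms(3) by (intro nn_integral_mono) (auto split: split_indicator)
  also have "\<dots> < \<infinity>" using assms(1) by (simp add: finite_measure.emeasure_finite less_top[symmetric])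
  finally show "emeasure (density M (\<lambda>x. ennreal (w x))) (space (density M (\<lambda>x. ennreal (w x)))) \<noteq> \<infinity>"
    by simp
qed

lemma meas_fst: "fst \<in> borel_measurable (borel :: ('a::metric_space \<times> 'a) measure)"
  by (intro borel_measurable_continuous_onI continuous_intros)

lemma meas_snd: "snd \<in> borel_measurable (borel :: ('a::metric_space \<times> 'a) measure)"
  by (intro borel_measurable_continuous_onI continuous_intros)

lemma OT_le: "\<pi> \<in> couplings \<mu> \<nu> \<Longrightarrow> OT_cost c \<mu> \<nu> \<le> ereal (integral\<^sup>L \<pi> c)"
  unfolding OT_cost_def by (rule INF_lower)

lemma competitor:
  fixes c :: "'a::metric_space \<times> 'a \<Rightarrow> real"
  assumes compact: "compact (UNIV :: 'a set)"
    and c_cont: "continuous_on UNIV c"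
    and T_nonneg: "\<forall>\<mu>\<in>Mplus. \<forall>\<nu>\<in>Mplus. 0 \<le> OT_cost c \<mu> \<nu>"
    and T_diag: "\<forall>\<mu>\<in>Mplus. OT_cost c \<mu> \<mu> = 0"
    and pi: "\<pi> \<in> couplings \<mu> \<nu>"
    and w: "w \<in> borel_measurable borel" "\<And>p. 0 \<le> w p" "\<And>p. w p \<le> 1"
    and eps: "0 < \<epsilon>"
  shows "OT_cost c \<mu> (msum (distr (density \<pi> (\<lambda>p. ennreal (1 - w p))) borel snd)
                            (distr (density \<pi> (\<lambda>p. ennreal (w p))) borel fst))
         \<le> ereal (integral\<^sup>L \<pi> c + \<epsilon>)"
proof -
  have sp: "sets \<pi> = sets borel" and fp: "finite_measure \<pi>"
    and mu: "distr \<pi> borel fst = \<mu>" and nu: "distr \<pi> borel snd = \<nu>"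
    using pi by (auto simp: couplings_def)
  interpret fp: finite_measure \<pi> by (rule fp)
  have cm: "c \<in> borel_measurable borel" by (rule borel_measurable_continuous_onI[OF c_cont])
  have "compact (UNIV \<times> UNIV :: ('a \<times> 'a) set)" using compact by (intro compact_Times)
  then have "compact (UNIV :: ('a \<times> 'a) set)" by simp
  then have "compact (c ` UNIV)"
    using c_cont by (intro compact_continuous_image) auto
  then obtain B where B: "\<And>p. norm (c p) \<le> B"
    using compact_imp_bounded[of "c ` UNIV"] by (auto simp: bounded_iff)
  have intc: "integrable M c" if "finite_measure M" "sets M = sets borel" for M
  proof -
    interpret finite_measure M by fact
    show ?thesis using B cm that(2) by (intro integrable_const_bound[where B=B]) (auto cong: measurable_cong_sets)
  qed
  define wr where "wr p = 1 - w p" for p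
  have wr: "wr \<in> borel_measurable borel" "\<And>p. 0 \<le> wr p" "\<And>p. wr p \<le> 1"
    using w unfolding wr_def[abs_def] by auto
  define \<pi>w where "\<pi>w = density \<pi> (\<lambda>p. ennreal (w p))"
  define \<pi>r where "\<pi>r = density \<pi> (\<lambda>p. ennreal (wr p))"
  have wpi: "w \<in> borel_measurable \<pi>" "wr \<in> borel_measurable \<pi>" using w wr sp by (auto cong: measurable_cong_sets)
  have s_w: "sets \<pi>w = sets borel" and s_r: "sets \<pi>r = sets borel" using sp by (auto simp: \<pi>w_def \<pi>r_def)
  have f_w: "finite_measure \<pi>w" unfolding \<pi>w_def
    using fp wpi w by (intro finite_measure_density_le1) auto
  have f_r: "finite_measure \<pi>r" unfolding \<pi>r_def
    using fp wpi wr by (intro finite_measure_density_le1) auto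
  have sum: "msum \<pi>r \<pi>w = \<pi>"
  proof -
    have "msum \<pi>r \<pi>w = density \<pi> (\<lambda>p. ennreal (wr p) + ennreal (w p))"
      unfolding \<pi>r_def \<pi>w_def using wpi by (intro density_add_msum[symmetric]) auto
    also have "(\<lambda>p. ennreal (wr p) + ennreal (w p)) = (\<lambda>_. 1)"
      using w wr by (auto simp: fun_eq_iff wr_def ennreal_plus[symmetric])
    finally show ?thesis by (simp add: density_1)
  qed
  have fst_w: "fst \<in> measurable \<pi>w borel" "fst \<in> measurable \<pi>r borel"
    and snd_w: "snd \<in> measurable \<pi>w borel" "snd \<in> measurable \<pi>r borel"
    using meas_fst meas_snd s_w s_r by (auto cong: measurable_cong_sets)
  define \<mu>w where "\<mu>w = distr \<pi>w borel fst"
  have \<mu>w: "\<mu>w \<in> Mplus" unfolding \<mu>w_def Mplus_def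
    using finite_measure.finite_measure_distr[OF f_w fst_w(1)] by simp
  have \<nu>w: "distr \<pi>w borel snd \<in> Mplus" unfolding Mplus_def
    using finite_measure.finite_measure_distr[OF f_w snd_w(1)] by simp
  have "\<pi>w \<in> couplings \<mu>w (distr \<pi>w borel snd)"
    unfolding couplings_def \<mu>w_def using s_w f_w by simp
  then have "0 \<le> ereal (integral\<^sup>L \<pi>w c)"
    using T_nonneg \<mu>w \<nu>w OT_le order_trans by blast
  then have cw: "0 \<le> integral\<^sup>L \<pi>w c" by simp
  have "OT_cost c \<mu>w \<mu>w < ereal \<epsilon>" using T_diag \<mu>w eps by simp
  then obtain \<tau> where tau: "\<tau> \<in> couplings \<mu>w \<mu>w" "integral\<^sup>L \<tau> c < \<epsilon>"
    unfolding OT_cost_def INF_less_iff by auto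
  have s_t: "sets \<tau> = sets borel" and f_t: "finite_measure \<tau>"
    and t1: "distr \<tau> borel fst = \<mu>w" and t2: "distr \<tau> borel snd = \<mu>w"
    using tau by (auto simp: couplings_def)
  define \<pi>' where "\<pi>' = msum \<pi>r \<tau>"
  have "\<pi>' \<in> couplings \<mu> (msum (distr \<pi>r borel snd) (distr \<pi>w borel fst))"
    unfolding couplings_def
  proof (intro CollectI conjI)
    show "sets \<pi>' = sets borel" using s_r by (simp add: \<pi>'_def)
    show "finite_measure \<pi>'" unfolding \<pi>'_def using f_r f_t s_t s_r by (intro finite_measure_msum) auto
    have "distr \<pi>' borel fst = msum (distr \<pi>r borel fst) (distr \<tau> borel fst)"
      unfolding \<pi>'_def using s_t s_r fst_w by (intro distr_msum) auto
    also have "\<dots> = msum (distr \<pi>r borel fst) (distr \<pi>w borel fst)" using t1 by (simp add: \<mu>w_def)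
    also have "\<dots> = distr (msum \<pi>r \<pi>w) borel fst"
      using s_w s_r fst_w by (intro distr_msum[symmetric]) auto
    finally show "distr \<pi>' borel fst = \<mu>" using sum mu by simp
    have "distr \<pi>' borel snd = msum (distr \<pi>r borel snd) (distr \<tau> borel snd)"
      unfolding \<pi>'_def using s_t s_r snd_w by (intro distr_msum) (auto cong: measurable_cong_sets)
    then show "distr \<pi>' borel snd = msum (distr \<pi>r borel snd) (distr \<pi>w borel fst)"
      using t2 by (simp add: \<mu>w_def)
  qed
  then have "OT_cost c \<mu> (msum (distr \<pi>r borel snd) (distr \<pi>w borel fst)) \<le> ereal (integral\<^sup>L \<pi>' c)"
    by (rule OT_le)
  also have "integral\<^sup>L \<pi>' c = integral\<^sup>L \<pi>r c + integral\<^sup>L \<tau> c"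
    unfolding \<pi>'_def using s_t s_r intc f_t f_r by (intro integral_msum) auto
  also have "integral\<^sup>L \<pi> c = integral\<^sup>L \<pi>r c + integral\<^sup>L \<pi>w c"
    unfolding sum[symmetric] using s_w s_r intc f_w f_r by (intro integral_msum) auto
  ultimately show ?thesis using cw tau(2) unfolding \<pi>r_def \<pi>w_def wr_def
    by (smt (verit) ereal_less_eq(3) order_trans)
qed



lemma f_cont:
  assumes fe: "finite_entropy_function f"
  shows "continuous_on {0..} f"
proof -
  have cvx: "convex_on {0..} f" and lsc: "lsc_nonneg f"
    using fe by (auto simp: finite_entropy_function_def)
  have c0: "continuous_on {0<..} f"
    by (rule convex_on_continuous) (auto intro: convex_on_subset[OF cvx])
  show ?thesis
    unfolding continuous_on_eq_continuous_within
  proof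
    fix x :: real assume x: "x \<in> {0..}"
    show "continuous (at x within {0..}) f"
    proof (cases "x = 0")
      case False
      then have "x \<in> {0<..}" using x by auto
      then have "isCont f x" using c0 continuous_on_eq_continuous_at[of "{0<..}" f] by auto
      then show ?thesis by (rule continuous_at_imp_continuous_at_within)
    next
      case True
      show ?thesis unfolding continuous_within_eps_delta True
      proof (intro allI impI)
        fix e :: real assume e: "0 < e"
        have "\<exists>d>0. \<forall>t\<ge>0. \<bar>t - 0\<bar> < d \<longrightarrow> f 0 - e < f t"
          using lsc e unfolding lsc_nonneg_def by blast
        then obtain d1 where d1: "0 < d1" "\<forall>t\<ge>0. \<bar>t - 0\<bar> < d1 \<longrightarrow> f 0 - e < f t"
          by blast
        define K where "K = \<bar>f 1 - f 0\<bar> + 1"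
        have K: "0 < K" by (simp add: K_def)
        define d where "d = min (min d1 1) (e / K)"
        have d: "0 < d" using d1 e K by (simp add: d_def)
        show "\<exists>d>0. \<forall>x'\<in>{0..}. dist x' 0 < d \<longrightarrow> dist (f x') (f 0) < e"
        proof (intro exI[of _ d] conjI ballI impI d)
          fix s :: real assume s: "s \<in> {0..}" "dist s 0 < d"
          then have s0: "0 \<le> s" "s < d" by auto
          have "s < 1" "s < d1" "s < e / K" using s0 by (auto simp: d_def)
          have "f ((1 - s) * 0 + s * 1) \<le> (1 - s) * f 0 + s * f 1"
            using convex_onD[OF cvx, of s 0 1] s0 \<open>s < 1\<close> by simp
          then have up: "f s \<le> f 0 + s * (f 1 - f 0)" by (simp add: algebra_simps)
          have "s * (f 1 - f 0) \<le> s * K" using s0 by (intro mult_left_mono) (auto simp: K_def)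
          also have "s * K < e" using \<open>s < e / K\<close> K by (simp add: field_simps)
          finally have "f s < f 0 + e" using up by linarith
          moreover have "f 0 - e < f s" using d1(2) s0 \<open>s < d1\<close> by auto
          ultimately show "dist (f s) (f 0) < e" by (simp add: dist_real_def abs_less_iff)
        qed
      qed
    qed
  qed
qed

lemma meas_f_comp:
  assumes fe: "finite_entropy_function f" and g: "g \<in> borel_measurable M" and g0: "\<And>x. 0 \<le> g x"
  shows "(\<lambda>x. f (g x)) \<in> borel_measurable M"
proof -
  have "continuous_on UNIV (\<lambda>y. f (max 0 y))"
    by (rule continuous_on_compose2[OF f_cont[OF fe]]) (auto intro: continuous_intros)
  then have "(\<lambda>y. f (max 0 y)) \<in> borel_measurable borel" by (rule borel_measurable_continuous_onI)
  then have "(\<lambda>x. f (max 0 (g x))) \<in> borel_measurable M" using g by measurable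
  moreover have "(\<lambda>x. f (max 0 (g x))) = (\<lambda>x. f (g x))" using g0 by (simp add: fun_eq_iff max_def)
  ultimately show ?thesis by simp
qed

lemma L_rep:
  assumes m: "m \<in> Mplus" and N: "N \<in> Mplus" and ac: "absolutely_continuous m N"
  shows "\<exists>d. d \<in> borel_measurable borel \<and> (\<forall>x. 0 \<le> d x) \<and> N = density m (\<lambda>x. ennreal (d x))
             \<and> (AE x in m. RN_deriv m N x = ennreal (d x))"
proof -
  have sm: "sets m = sets borel" and fm: "finite_measure m" using m by (auto simp: Mplus_def)
  have sN: "sets N = sets m" and fN: "finite_measure N" using N sm by (auto simp: Mplus_def)
  interpret fm: finite_measure m by (rule fm)
  obtain D where D: "D \<in> borel_measurable m" "AE x in m. RN_deriv m N x = ennreal (D x)" "\<And>x. 0 \<le> D x"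
    using fm.real_RN_deriv[OF fN ac sN] by metis
  have "N = density m (RN_deriv m N)" using fm.density_RN_deriv[OF ac sN] by simp
  also have "\<dots> = density m (\<lambda>x. ennreal (D x))"
    using D by (intro density_cong) auto
  finally show ?thesis using D sm by (intro exI[of _ D]) (auto cong: measurable_cong_sets)
qed

lemma density_le_AE:
  fixes a b :: "'a \<Rightarrow> real"
  assumes a: "a \<in> borel_measurable M" "\<And>x. 0 \<le> a x" and b: "b \<in> borel_measurable M" "\<And>x. 0 \<le> b x"
    and fin: "(\<integral>\<^sup>+x. ennreal (b x) \<partial>M) \<noteq> \<infinity>"
    and le: "\<And>X. X \<in> sets M \<Longrightarrow> emeasure (density M (\<lambda>x. ennreal (a x))) X \<le> emeasure (density M (\<lambda>x. ennreal (b x))) X"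
  shows "AE x in M. a x \<le> b x"
proof -
  define N where "N = {x\<in>space M. b x < a x}"
  have N: "N \<in> sets M" unfolding N_def using a b by measurable
  define Pa where "Pa = (\<integral>\<^sup>+ x. ennreal (a x) * indicator N x \<partial>M)"
  define Pb where "Pb = (\<integral>\<^sup>+ x. ennreal (b x) * indicator N x \<partial>M)"
  have "Pb \<le> (\<integral>\<^sup>+x. ennreal (b x) \<partial>M)" unfolding Pb_def
    by (intro nn_integral_mono) (simp add: indicator_def)
  then have Pbf: "Pb \<noteq> \<infinity>" using fin by (auto simp: top_unique)
  have PaPb: "Pa \<le> Pb" using le[OF N] a b N by (simp add: emeasure_density Pa_def Pb_def)
  have ma: "(\<lambda>x. ennreal (a x) * indicator N x) \<in> borel_measurable M" using a N by measurable
  have mb: "(\<lambda>x. ennreal (b x) * indicator N x) \<in> borel_measurable M" using b N by measurable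
  have "(\<integral>\<^sup>+x. ennreal (a x) * indicator N x - ennreal (b x) * indicator N x \<partial>M) = Pa - Pb"
    unfolding Pa_def Pb_def
  proof (rule nn_integral_diff[OF ma mb])
    show "integral\<^sup>N M (\<lambda>x. ennreal (b x) * indicator N x) \<noteq> \<infinity>" using Pbf by (simp add: Pb_def)
    show "AE x in M. ennreal (b x) * indicator N x \<le> ennreal (a x) * indicator N x"
      by (intro AE_I2) (simp add: indicator_def N_def ennreal_leI)
  qed
  also have "\<dots> = 0"
  proof -
    have "Pa < top" using PaPb Pbf by (simp add: le_less_trans less_top)
    then show ?thesis using PaPb diff_eq_0_iff_ennreal by blast
  qed
  finally have ae: "AE x in M. ennreal (a x) * indicator N x - ennreal (b x) * indicator N x = 0"
    using ma mb by (subst (asm) nn_integral_0_iff_AE) auto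
  have imp: "x \<in> space M \<Longrightarrow> ennreal (a x) * indicator N x - ennreal (b x) * indicator N x = 0 \<Longrightarrow> a x \<le> b x" for x
  proof (rule ccontr)
    assume x: "x \<in> space M" "ennreal (a x) * indicator N x - ennreal (b x) * indicator N x = 0" "\<not> a x \<le> b x"
    then have "x \<in> N" by (simp add: N_def)
    with x have "ennreal (a x) - ennreal (b x) = 0" by simp
    then have "ennreal (a x - b x) = 0" using b(2)[of x] by (simp add: ennreal_minus)
    then show False using x(3) by simp
  qed
  show ?thesis
    by (rule AE_mp[OF ae AE_I2]) (use imp in blast)
qed

lemma rel_entropy_density:
  assumes sf: "sigma_finite_measure M" and g: "g \<in> borel_measurable M" and g0: "\<And>x. 0 \<le> g x"
  shows "rel_entropy f M (density M (\<lambda>x. ennreal (g x))) = (\<integral>\<^sup>+x. ennreal (f (g x)) \<partial>M)"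
proof -
  interpret sigma_finite_measure M by (rule sf)
  have ac: "absolutely_continuous M (density M (\<lambda>x. ennreal (g x)))"
    using g by (intro absolutely_continuousI_density) auto
  have "AE x in M. ennreal (g x) = RN_deriv M (density M (\<lambda>x. ennreal (g x))) x"
    using g by (intro RN_deriv_unique) auto
  then have "AE x in M. ennreal (f (enn2real (RN_deriv M (density M (\<lambda>x. ennreal (g x))) x))) = ennreal (f (g x))"
    by (rule eventually_mono) (metis enn2real_ennreal g0)
  then show ?thesis using ac unfolding rel_entropy_def by (simp add: nn_integral_cong_AE)
qed

lemma ent_int:
  fixes F' Fr \<rho> D :: "'a \<Rightarrow> real"
  assumes fin: "finite_measure M"
   and i\<rho>: "integrable M \<rho>" and iD: "integrable M D" and D0: "integral\<^sup>L M D = 0"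
   and iF: "integrable M Fr" and S: "S \<in> sets M"
   and mF': "F' \<in> borel_measurable M"
   and F'0: "AE x in M. 0 \<le> F' x"
   and bound: "AE x in M. F' x \<le> Fr x + \<kappa> * D x + \<alpha> * \<rho> x + \<alpha>' - \<beta> * indicator S x"
  shows "integrable M F'"
    "integral\<^sup>L M F' \<le> integral\<^sup>L M Fr + \<alpha> * integral\<^sup>L M \<rho> + \<alpha>' * measure M (space M) - \<beta> * measure M S"
proof -
  interpret finite_measure M by (rule fin)
  let ?R = "\<lambda>x. Fr x + \<kappa> * D x + \<alpha> * \<rho> x + \<alpha>' - \<beta> * indicator S x"
  have iS: "integrable M (indicator S :: 'a \<Rightarrow> real)" using S by (simp add: emeasure_finite less_top[symmetric])
  have iR: "integrable M ?R"
    using iF iD i\<rho> iS by (intro Bochner_Integration.integrable_add Bochner_Integration.integrable_diff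
        integrable_mult_right integrable_const) auto
  have "integral\<^sup>L M ?R = integral\<^sup>L M Fr + \<kappa> * integral\<^sup>L M D + \<alpha> * integral\<^sup>L M \<rho> + \<alpha>' * measure M (space M) - \<beta> * measure M S"
    using iF iD i\<rho> iS S
    by (simp add: Bochner_Integration.integral_add Bochner_Integration.integral_diff
        Bochner_Integration.integrable_add Bochner_Integration.integrable_diff integrable_mult_right
        mult.commute sets.Int_space_eq2)
  then have eqR: "integral\<^sup>L M ?R = integral\<^sup>L M Fr + \<alpha> * integral\<^sup>L M \<rho> + \<alpha>' * measure M (space M) - \<beta> * measure M S"
    using D0 by simp
  show iF': "integrable M F'"
  proof (rule Bochner_Integration.integrable_bound[OF iR mF'])
    show "AE x in M. norm (F' x) \<le> norm (?R x)"
      using F'0 bound by eventually_elim auto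
  qed
  have "integral\<^sup>L M F' \<le> integral\<^sup>L M ?R"
    using iF' iR bound by (rule integral_mono_AE)
  then show "integral\<^sup>L M F' \<le> integral\<^sup>L M Fr + \<alpha> * integral\<^sup>L M \<rho> + \<alpha>' * measure M (space M) - \<beta> * measure M S"
    using eqR by simp
qed



lemma plan_split:
  assumes fp: "finite_measure \<pi>" and w: "w \<in> borel_measurable \<pi>" "\<And>p. 0 \<le> w p" "\<And>p. w p \<le> 1"
  shows "msum (density \<pi> (\<lambda>p. ennreal (1 - w p))) (density \<pi> (\<lambda>p. ennreal (w p))) = \<pi>"
proof -
  have "msum (density \<pi> (\<lambda>p. ennreal (1 - w p))) (density \<pi> (\<lambda>p. ennreal (w p)))
      = density \<pi> (\<lambda>p. ennreal (1 - w p) + ennreal (w p))"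
    using w by (intro density_add_msum[symmetric]) auto
  also have "(\<lambda>p. ennreal (1 - w p) + ennreal (w p)) = (\<lambda>_. 1)"
    using w by (auto simp: fun_eq_iff ennreal_plus[symmetric])
  finally show ?thesis by (simp add: density_1)
qed

lemma density_le1_emeasure:
  assumes w: "w \<in> borel_measurable \<pi>" "\<And>p. w p \<le> 1" and Y: "Y \<in> sets \<pi>"
  shows "emeasure (density \<pi> (\<lambda>p. ennreal (w p))) Y \<le> emeasure \<pi> Y"
proof -
  have "emeasure (density \<pi> (\<lambda>p. ennreal (w p))) Y = (\<integral>\<^sup>+x. ennreal (w x) * indicator Y x \<partial>\<pi>)"
    using w Y by (simp add: emeasure_density)
  also have "\<dots> \<le> (\<integral>\<^sup>+x. indicator Y x \<partial>\<pi>)"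
    using w by (intro nn_integral_mono) (auto split: split_indicator)
  also have "\<dots> = emeasure \<pi> Y" using Y by simp
  finally show ?thesis .
qed

lemma distr_density_le:
  assumes w: "w \<in> borel_measurable \<pi>" "\<And>p. w p \<le> 1" and g: "g \<in> measurable \<pi> K" and X: "X \<in> sets K"
  shows "emeasure (distr (density \<pi> (\<lambda>p. ennreal (w p))) K g) X \<le> emeasure (distr \<pi> K g) X"
proof -
  have g': "g \<in> measurable (density \<pi> (\<lambda>p. ennreal (w p))) K" using g by (simp cong: measurable_cong_sets)
  have "g -` X \<inter> space \<pi> \<in> sets \<pi>" using g X by (rule measurable_sets)
  then show ?thesis using g g' X w by (simp add: emeasure_distr density_le1_emeasure)
qed

lemma ac_le:
  assumes "absolutely_continuous m \<mu>" "sets \<mu> = sets m" "sets \<mu>' = sets m"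
    and "\<And>X. X \<in> sets m \<Longrightarrow> emeasure \<mu>' X \<le> emeasure \<mu> X"
  shows "absolutely_continuous m \<mu>'"
  unfolding absolutely_continuous_def
proof
  fix X assume X: "X \<in> null_sets m"
  then have "X \<in> null_sets \<mu>" using assms(1) unfolding absolutely_continuous_def by auto
  then have "emeasure \<mu> X = 0" "X \<in> sets m" using assms(2) X by auto
  then have "emeasure \<mu>' X = 0" using assms(4)[of X] by simp
  then show "X \<in> null_sets \<mu>'" using assms(3) \<open>X \<in> sets m\<close> by (simp add: null_sets_def)
qed



lemma G:
  fixes c :: "'a::metric_space \<times> 'a \<Rightarrow> real"
    and f :: "real \<Rightarrow> real"
    and m \<mu> \<nu> :: "'a measure"
  assumes compact: "compact (UNIV :: 'a set)"
    and c_cont: "continuous_on UNIV c"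
    and T_nonneg: "\<forall>\<mu>\<in>Mplus. \<forall>\<nu>\<in>Mplus. 0 \<le> OT_cost c \<mu> \<nu>"
    and T_diag: "\<forall>\<mu>\<in>Mplus. OT_cost c \<mu> \<mu> = 0"
    and f_entropy: "finite_entropy_function f"
    and m: "m \<in> Mplus"
    and \<mu>: "\<mu> \<in> Mplus"
    and \<nu>: "\<nu> \<in> Mplus"
    and \<nu>_min: "\<forall>\<nu>'\<in>Mplus. OT_cost c \<mu> \<nu> + enn2ereal (rel_entropy f m \<nu>)
                          \<le> OT_cost c \<mu> \<nu>' + enn2ereal (rel_entropy f m \<nu>')"
    and \<mu>_ac: "absolutely_continuous m \<mu>"
    and \<rho>: "\<rho> \<in> borel_measurable borel" "\<And>x. 0 \<le> \<rho> x" "\<nu> = density m (\<lambda>x. ennreal (\<rho> x))"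
    and Hfin: "rel_entropy f m \<nu> \<noteq> \<infinity>"
    and Tfin: "OT_cost c \<mu> \<nu> < \<infinity>"
    and w: "w \<in> borel_measurable borel" "\<And>p. 0 \<le> w p" "\<And>p. w p \<le> 1"
    and S: "S \<in> sets borel"
    and delta: "\<alpha> * integral\<^sup>L m \<rho> + \<alpha>' * measure m (space m) - \<beta> * measure m S < 0"
    and HYP: "\<And>\<pi> a b. \<pi> \<in> couplings \<mu> \<nu> \<Longrightarrow> a \<in> borel_measurable borel \<Longrightarrow> (\<And>x. 0 \<le> a x) \<Longrightarrow>
        b \<in> borel_measurable borel \<Longrightarrow> (\<And>x. 0 \<le> b x) \<Longrightarrow>
        distr (density \<pi> (\<lambda>p. ennreal (w p))) borel fst = density m (\<lambda>x. ennreal (a x)) \<Longrightarrow>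
        distr (density \<pi> (\<lambda>p. ennreal (w p))) borel snd = density m (\<lambda>x. ennreal (b x)) \<Longrightarrow>
        AE x in m. f (\<rho> x - b x + a x) \<le> f (\<rho> x) + \<kappa> * (a x - b x) + \<alpha> * \<rho> x + \<alpha>' - \<beta> * indicator S x"
  shows False
proof -
  have sm: "sets m = sets borel" and fm: "finite_measure m" using m by (auto simp: Mplus_def)
  interpret fm: finite_measure m by (rule fm)
  have sp_m: "space m = UNIV" using sets_eq_imp_space_eq[OF sm] by simp
  have smu: "sets \<mu> = sets borel" and fmu: "finite_measure \<mu>" using \<mu> by (auto simp: Mplus_def)
  have snu: "sets \<nu> = sets borel" and fnu: "finite_measure \<nu>" using \<nu> by (auto simp: Mplus_def)
  have \<rho>m: "\<rho> \<in> borel_measurable m" using \<rho>(1) sm by (simp cong: measurable_cong_sets)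
  have fmeas: "(\<lambda>x. f (\<rho> x)) \<in> borel_measurable m" using meas_f_comp[OF f_entropy \<rho>m \<rho>(2)] .
  have f0: "\<And>s. 0 \<le> s \<Longrightarrow> 0 \<le> f s" using f_entropy by (simp add: finite_entropy_function_def)
  have "(\<integral>\<^sup>+x. ennreal (\<rho> x) \<partial>m) = emeasure \<nu> (space m)"
    using \<rho> \<rho>m by (simp add: emeasure_density)
  also have "\<dots> < \<infinity>" using fnu snu sm sets_eq_imp_space_eq[OF snu]
    by (simp add: finite_measure.emeasure_finite less_top[symmetric] sp_m)
  finally have \<rho>fin: "(\<integral>\<^sup>+x. ennreal (\<rho> x) \<partial>m) < \<infinity>" .
  have i\<rho>: "integrable m \<rho>"
    using \<rho>fin \<rho>m \<rho>(2) by (intro integrableI_nonneg) auto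
  have Hnu: "rel_entropy f m \<nu> = (\<integral>\<^sup>+x. ennreal (f (\<rho> x)) \<partial>m)"
    unfolding \<rho>(3) using \<rho>m \<rho>(2) by (intro rel_entropy_density) (auto intro: fm.sigma_finite_measure_axioms)
  have iF: "integrable m (\<lambda>x. f (\<rho> x))"
    using Hfin Hnu fmeas f0 \<rho>(2) by (intro integrableI_nonneg) (auto simp: less_top)
  define H0 where "H0 = integral\<^sup>L m (\<lambda>x. f (\<rho> x))"
  have H0: "rel_entropy f m \<nu> = ennreal H0"
    unfolding Hnu H0_def using iF f0 \<rho>(2) by (intro nn_integral_eq_integral) auto
  have H00: "0 \<le> H0" unfolding H0_def using f0 \<rho>(2) by (intro integral_nonneg_AE) auto
  have T0nn: "0 \<le> OT_cost c \<mu> \<nu>" using T_nonneg \<mu> \<nu> by blast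
  define T0 where "T0 = real_of_ereal (OT_cost c \<mu> \<nu>)"
  have T0: "OT_cost c \<mu> \<nu> = ereal T0" unfolding T0_def using T0nn Tfin
    by (cases "OT_cost c \<mu> \<nu>") auto
  define \<delta> where "\<delta> = - (\<alpha> * integral\<^sup>L m \<rho> + \<alpha>' * measure m (space m) - \<beta> * measure m S)"
  have \<delta>: "0 < \<delta>" using delta by (simp add: \<delta>_def)
  have "OT_cost c \<mu> \<nu> < ereal (T0 + \<delta> / 2)" using T0 \<delta> by simp
  then obtain \<pi> where \<pi>: "\<pi> \<in> couplings \<mu> \<nu>" "integral\<^sup>L \<pi> c < T0 + \<delta> / 2"
    unfolding OT_cost_def INF_less_iff by auto
  have sp: "sets \<pi> = sets borel" and fp: "finite_measure \<pi>"
    and pmu: "distr \<pi> borel fst = \<mu>" and pnu: "distr \<pi> borel snd = \<nu>"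
    using \<pi> by (auto simp: couplings_def)
  have wpi: "w \<in> borel_measurable \<pi>" using w sp by (simp cong: measurable_cong_sets)
  define \<pi>w where "\<pi>w = density \<pi> (\<lambda>p. ennreal (w p))"
  define \<pi>r where "\<pi>r = density \<pi> (\<lambda>p. ennreal (1 - w p))"
  have s_w: "sets \<pi>w = sets borel" and s_r: "sets \<pi>r = sets borel" using sp by (auto simp: \<pi>w_def \<pi>r_def)
  have f_w: "finite_measure \<pi>w" unfolding \<pi>w_def
    using fp wpi w by (intro finite_measure_density_le1) auto
  have f_r: "finite_measure \<pi>r" unfolding \<pi>r_def
    using fp wpi w by (intro finite_measure_density_le1) (auto)
  have split: "msum \<pi>r \<pi>w = \<pi>" unfolding \<pi>r_def \<pi>w_def by (rule plan_split[OF fp wpi w(2,3)])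
  have fstp: "fst \<in> measurable \<pi> borel" "fst \<in> measurable \<pi>w borel" "fst \<in> measurable \<pi>r borel"
    and sndp: "snd \<in> measurable \<pi> borel" "snd \<in> measurable \<pi>w borel" "snd \<in> measurable \<pi>r borel"
    using meas_fst meas_snd s_w s_r sp by (auto cong: measurable_cong_sets)
  define \<mu>w where "\<mu>w = distr \<pi>w borel fst"
  define \<nu>w where "\<nu>w = distr \<pi>w borel snd"
  define \<nu>r where "\<nu>r = distr \<pi>r borel snd"
  have \<mu>wM: "\<mu>w \<in> Mplus" unfolding \<mu>w_def Mplus_def
    using finite_measure.finite_measure_distr[OF f_w fstp(2)] by simp
  have \<nu>wM: "\<nu>w \<in> Mplus" unfolding \<nu>w_def Mplus_def
    using finite_measure.finite_measure_distr[OF f_w sndp(2)] by simp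
  have \<nu>rM: "\<nu>r \<in> Mplus" unfolding \<nu>r_def Mplus_def
    using finite_measure.finite_measure_distr[OF f_r sndp(3)] by simp
  have \<mu>w_le: "emeasure \<mu>w X \<le> emeasure \<mu> X" if "X \<in> sets borel" for X
    using distr_density_le[OF wpi w(3) fstp(1) that] pmu by (simp add: \<mu>w_def \<pi>w_def)
  have \<nu>w_le: "emeasure \<nu>w X \<le> emeasure \<nu> X" if "X \<in> sets borel" for X
    using distr_density_le[OF wpi w(3) sndp(1) that] pnu by (simp add: \<nu>w_def \<pi>w_def)
  have \<nu>_ac: "absolutely_continuous m \<nu>" unfolding \<rho>(3) using \<rho>m by (intro absolutely_continuousI_density) auto
  have \<mu>w_ac: "absolutely_continuous m \<mu>w"
    using \<mu>wM sm by (intro ac_le[OF \<mu>_ac]) (auto simp: Mplus_def smu intro: \<mu>w_le)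
  have \<nu>w_ac: "absolutely_continuous m \<nu>w"
    using \<nu>wM sm by (intro ac_le[OF \<nu>_ac]) (auto simp: Mplus_def snu intro: \<nu>w_le)
  obtain a where a: "a \<in> borel_measurable borel" "\<And>x. 0 \<le> a x" "\<mu>w = density m (\<lambda>x. ennreal (a x))"
    using L_rep[OF m \<mu>wM \<mu>w_ac] by auto
  obtain b where b: "b \<in> borel_measurable borel" "\<And>x. 0 \<le> b x" "\<nu>w = density m (\<lambda>x. ennreal (b x))"
    using L_rep[OF m \<nu>wM \<nu>w_ac] by auto
  have am: "a \<in> borel_measurable m" and bm: "b \<in> borel_measurable m"
    using a b sm by (auto cong: measurable_cong_sets)
  have bound: "AE x in m. f (\<rho> x - b x + a x) \<le> f (\<rho> x) + \<kappa> * (a x - b x) + \<alpha> * \<rho> x + \<alpha>' - \<beta> * indicator S x"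
  proof (rule HYP[OF \<pi>(1) a(1,2) b(1,2)])
    show "distr (density \<pi> (\<lambda>p. ennreal (w p))) borel fst = density m (\<lambda>x. ennreal (a x))"
      using a(3) by (simp add: \<mu>w_def \<pi>w_def)
    show "distr (density \<pi> (\<lambda>p. ennreal (w p))) borel snd = density m (\<lambda>x. ennreal (b x))"
      using b(3) by (simp add: \<nu>w_def \<pi>w_def)
  qed
  have ble: "AE x in m. b x \<le> \<rho> x"
  proof (rule density_le_AE[OF bm b(2) \<rho>m \<rho>(2)])
    show "(\<integral>\<^sup>+x. ennreal (\<rho> x) \<partial>m) \<noteq> \<infinity>" using \<rho>fin by simp
    fix X assume "X \<in> sets m"
    then show "emeasure (density m (\<lambda>x. ennreal (b x))) X \<le> emeasure (density m (\<lambda>x. ennreal (\<rho> x))) X"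
      using \<nu>w_le[of X] b(3) \<rho>(3) sm by simp
  qed
  define \<rho>r where "\<rho>r x = max 0 (\<rho> x - b x)" for x
  have \<rho>rm: "\<rho>r \<in> borel_measurable m" unfolding \<rho>r_def[abs_def] using \<rho>m bm by measurable
  have \<rho>r0: "\<And>x. 0 \<le> \<rho>r x" by (simp add: \<rho>r_def)
  have ae_r: "AE x in m. \<rho> x = \<rho>r x + b x" using ble by eventually_elim (auto simp: \<rho>r_def)
  have nu_split: "\<nu> = msum \<nu>r \<nu>w"
  proof -
    have "\<nu> = distr (msum \<pi>r \<pi>w) borel snd" using split pnu by simp
    also have "\<dots> = msum \<nu>r \<nu>w" unfolding \<nu>r_def \<nu>w_def using s_w s_r sndp by (intro distr_msum) auto
    finally show ?thesis .
  qed
  have nu_split2: "\<nu> = msum (density m (\<lambda>x. ennreal (\<rho>r x))) \<nu>w"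
  proof -
    have "\<nu> = density m (\<lambda>x. ennreal (\<rho>r x) + ennreal (b x))"
      unfolding \<rho>(3)
    proof (rule density_cong)
      show "(\<lambda>x. ennreal (\<rho> x)) \<in> borel_measurable m" using \<rho>m by simp
      show "(\<lambda>x. ennreal (\<rho>r x) + ennreal (b x)) \<in> borel_measurable m" using \<rho>rm bm by simp
      show "AE x in m. ennreal (\<rho> x) = ennreal (\<rho>r x) + ennreal (b x)"
        using ae_r
      proof (rule eventually_mono)
        fix x assume "\<rho> x = \<rho>r x + b x"
        then show "ennreal (\<rho> x) = ennreal (\<rho>r x) + ennreal (b x)"
          using \<rho>r0[of x] b(2)[of x] by (simp add: ennreal_plus)
      qed
    qed
    also have "\<dots> = msum (density m (\<lambda>x. ennreal (\<rho>r x))) \<nu>w"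
      unfolding b(3) using \<rho>rm bm by (intro density_add_msum) auto
    finally show ?thesis .
  qed
  have nur: "\<nu>r = density m (\<lambda>x. ennreal (\<rho>r x))"
  proof (rule measure_eqI)
    show "sets \<nu>r = sets (density m (\<lambda>x. ennreal (\<rho>r x)))" using sm by (simp add: \<nu>r_def)
    fix X assume "X \<in> sets \<nu>r"
    then have X: "X \<in> sets borel" by (simp add: \<nu>r_def)
    have fin: "emeasure \<nu>w X \<noteq> \<infinity>" using \<nu>wM by (simp add: Mplus_def finite_measure.emeasure_finite)
    have sw: "sets \<nu>w = sets \<nu>r" using \<nu>wM \<nu>rM by (simp add: Mplus_def)
    have sw2: "sets \<nu>w = sets (density m (\<lambda>x. ennreal (\<rho>r x)))" using \<nu>wM sm by (simp add: Mplus_def)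
    have Xr: "X \<in> sets \<nu>r" using X \<nu>rM by (simp add: Mplus_def)
    have Xd: "X \<in> sets (density m (\<lambda>x. ennreal (\<rho>r x)))" using X sm by simp
    have "emeasure \<nu>r X + emeasure \<nu>w X = emeasure \<nu> X"
      unfolding nu_split by (rule emeasure_msum[OF sw Xr, symmetric])
    also have "\<dots> = emeasure (density m (\<lambda>x. ennreal (\<rho>r x))) X + emeasure \<nu>w X"
      by (subst nu_split2) (rule emeasure_msum[OF sw2 Xd])
    finally have "emeasure \<nu>r X + emeasure \<nu>w X = emeasure (density m (\<lambda>x. ennreal (\<rho>r x))) X + emeasure \<nu>w X" .
    then show "emeasure \<nu>r X = emeasure (density m (\<lambda>x. ennreal (\<rho>r x))) X"
      using fin by (metis add.commute ennreal_add_left_cancel)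
  qed
  define \<rho>' where "\<rho>' x = \<rho>r x + a x" for x
  have \<rho>'m: "\<rho>' \<in> borel_measurable m" unfolding \<rho>'_def[abs_def] using \<rho>rm am by measurable
  have \<rho>'0: "\<And>x. 0 \<le> \<rho>' x" using \<rho>r0 a(2) by (simp add: \<rho>'_def add_nonneg_nonneg)
  have ae': "AE x in m. \<rho>' x = \<rho> x - b x + a x" using ae_r by eventually_elim (simp add: \<rho>'_def)
  define \<nu>' where "\<nu>' = msum \<nu>r \<mu>w"
  have nu': "\<nu>' = density m (\<lambda>x. ennreal (\<rho>' x))"
  proof -
    have "\<nu>' = msum (density m (\<lambda>x. ennreal (\<rho>r x))) (density m (\<lambda>x. ennreal (a x)))"
      unfolding \<nu>'_def nur a(3) ..
    also have "\<dots> = density m (\<lambda>x. ennreal (\<rho>r x) + ennreal (a x))"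
      using \<rho>rm am by (intro density_add_msum[symmetric]) auto
    also have "\<dots> = density m (\<lambda>x. ennreal (\<rho>' x))"
      using \<rho>r0 a(2) by (simp add: \<rho>'_def ennreal_plus)
    finally show ?thesis .
  qed
  have \<nu>'M: "\<nu>' \<in> Mplus"
    unfolding \<nu>'_def Mplus_def using \<nu>rM \<mu>wM by (auto simp: Mplus_def intro!: finite_measure_msum)
  have OT': "OT_cost c \<mu> \<nu>' \<le> ereal (integral\<^sup>L \<pi> c + \<delta> / 2)"
    unfolding \<nu>'_def \<nu>r_def \<mu>w_def \<pi>r_def \<pi>w_def
    using \<delta> by (intro competitor[OF compact c_cont T_nonneg T_diag \<pi>(1) w]) auto
  have Hnu': "rel_entropy f m \<nu>' = (\<integral>\<^sup>+x. ennreal (f (\<rho>' x)) \<partial>m)"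
    unfolding nu' using \<rho>'m \<rho>'0 by (intro rel_entropy_density) (auto intro: fm.sigma_finite_measure_axioms)
  have emw: "emeasure \<mu>w UNIV = emeasure \<pi>w (space \<pi>w)" "emeasure \<nu>w UNIV = emeasure \<pi>w (space \<pi>w)"
    unfolding \<mu>w_def \<nu>w_def using fstp sndp by (simp_all add: emeasure_distr)
  have Um: "UNIV \<in> sets m" using sets.top[of m] sp_m by simp
  have na: "(\<integral>\<^sup>+x. ennreal (a x) \<partial>m) = emeasure \<mu>w UNIV"
    unfolding a(3) using am Um by (simp add: emeasure_density)
  have nb: "(\<integral>\<^sup>+x. ennreal (b x) \<partial>m) = emeasure \<nu>w UNIV"
    unfolding b(3) using bm Um by (simp add: emeasure_density)
  have finw: "emeasure \<pi>w (space \<pi>w) < \<infinity>" using f_w by (simp add: finite_measure.emeasure_finite less_top[symmetric])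
  have ia: "integrable m a" using na emw finw am a(2) by (intro integrableI_nonneg) auto
  have ib: "integrable m b" using nb emw finw bm b(2) by (intro integrableI_nonneg) auto
  have "ennreal (integral\<^sup>L m a) = ennreal (integral\<^sup>L m b)"
    using nn_integral_eq_integral[OF ia] nn_integral_eq_integral[OF ib] na nb emw a(2) b(2) by simp
  then have "integral\<^sup>L m a = integral\<^sup>L m b"
    using a(2) b(2) by (simp add: integral_nonneg_AE ennreal_inj)
  then have D0: "integral\<^sup>L m (\<lambda>x. a x - b x) = 0" using ia ib by simp
  have Sm: "S \<in> sets m" using S sm by simp
  have F'm: "(\<lambda>x. f (\<rho>' x)) \<in> borel_measurable m" by (rule meas_f_comp[OF f_entropy \<rho>'m \<rho>'0])
  have bound': "AE x in m. f (\<rho>' x) \<le> f (\<rho> x) + \<kappa> * (a x - b x) + \<alpha> * \<rho> x + \<alpha>' - \<beta> * indicator S x"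
    using bound ae' by eventually_elim simp
  have iF': "integrable m (\<lambda>x. f (\<rho>' x))"
    and intF': "integral\<^sup>L m (\<lambda>x. f (\<rho>' x)) \<le> integral\<^sup>L m (\<lambda>x. f (\<rho> x)) + \<alpha> * integral\<^sup>L m \<rho> + \<alpha>' * measure m (space m) - \<beta> * measure m S"
    using ent_int[OF fm i\<rho> _ D0 iF Sm F'm _ bound'] ia ib f0 \<rho>'0 by auto
  define H1 where "H1 = integral\<^sup>L m (\<lambda>x. f (\<rho>' x))"
  have H1: "rel_entropy f m \<nu>' = ennreal H1"
    unfolding Hnu' H1_def using iF' f0 \<rho>'0 by (intro nn_integral_eq_integral) auto
  have H10: "0 \<le> H1" unfolding H1_def using f0 \<rho>'0 by (intro integral_nonneg_AE) auto
  have H1le: "H1 \<le> H0 - \<delta>" using intF' unfolding H1_def H0_def \<delta>_def by simp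
  have "OT_cost c \<mu> \<nu> + enn2ereal (rel_entropy f m \<nu>) \<le> OT_cost c \<mu> \<nu>' + enn2ereal (rel_entropy f m \<nu>')"
    using \<nu>_min \<nu>'M by blast
  also have "\<dots> \<le> ereal (integral\<^sup>L \<pi> c + \<delta> / 2) + ereal H1"
    using OT' H1 H10 by (intro add_mono) auto
  finally have "ereal T0 + ereal H0 \<le> ereal (integral\<^sup>L \<pi> c + \<delta> / 2) + ereal H1"
    using T0 H0 H00 by simp
  then have "T0 + H0 \<le> integral\<^sup>L \<pi> c + \<delta> / 2 + H1" by simp
  then show False using \<pi>(2) H1le \<delta> by linarith
qed



lemma upper_point:
  fixes f :: "real \<Rightarrow> real"
  assumes inc: "\<forall>r D. 0 \<le> r \<longrightarrow> r \<le> L \<longrightarrow> 0 \<le> D \<longrightarrow> D \<le> t * C1 \<longrightarrow> f (r + D) - f r \<le> k * D"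
    and dec: "\<forall>r D. L \<le> r \<longrightarrow> 0 \<le> D \<longrightarrow> D \<le> t * r \<longrightarrow> f (r - D) - f r \<le> - (s * D)"
    and dec3: "\<forall>r D. l3 \<le> r \<longrightarrow> 0 \<le> D \<longrightarrow> D \<le> t * r \<longrightarrow> f (r - D) - f r \<le> - ((k + \<Gamma>) * D)"
    and par: "C1 < L" "L < l3" "0 < t" "0 < \<Gamma>"
    and r: "0 \<le> r" and a: "0 \<le> a" "a \<le> t * C1" and b: "b = (if L < r then t * r else 0)"
  shows "f (r - b + a) \<le> f r + k * (a - b) + (max (k - s) 0 * t) * r + 0
           - (\<Gamma> * t * (l3 - C1)) * (if l3 \<le> r then 1 else 0)"
proof (cases "L < r")
  case False
  then have b0: "b = 0" using b by simp
  have "f (r + a) - f r \<le> k * a" using inc r False a by auto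
  moreover have "0 \<le> (max (k - s) 0 * t) * r" using par r by simp
  moreover have "\<not> l3 \<le> r" using False par by simp
  ultimately show ?thesis using b0 by simp
next
  case True
  then have bb: "b = t * r" using b by simp
  define D where "D = t * r - a"
  have "t * C1 \<le> t * r" using par True by (intro mult_left_mono) auto
  then have D0: "0 \<le> D" and Dr: "D \<le> t * r" using a by (auto simp: D_def)
  have eq: "r - b + a = r - D" "a - b = - D" using bb by (auto simp: D_def)
  have dm: "(k - s) * D \<le> (max (k - s) 0 * t) * r"
  proof -
    have "(k - s) * D \<le> max (k - s) 0 * D" using D0 by (intro mult_right_mono) auto
    also have "\<dots> \<le> max (k - s) 0 * (t * r)" using Dr by (intro mult_left_mono) auto
    finally show ?thesis by (simp add: algebra_simps)
  qed
  show ?thesis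
  proof (cases "l3 \<le> r")
    case False
    have "f (r - D) - f r \<le> - (s * D)" using dec True D0 Dr by auto
    moreover have "(k - s) * D = k * D - s * D" "k * (- D) = - (k * D)" by (simp_all add: algebra_simps)
    ultimately show ?thesis unfolding eq using dm False by simp
  next
    case True
    have "f (r - D) - f r \<le> - ((k + \<Gamma>) * D)" using dec3 True D0 Dr by auto
    moreover have "t * (l3 - C1) \<le> D"
    proof -
      have "t * (l3 - C1) \<le> t * (r - C1)" using True par by (intro mult_left_mono) auto
      then show ?thesis using a by (simp add: D_def algebra_simps)
    qed
    then have "\<Gamma> * (t * (l3 - C1)) \<le> \<Gamma> * D" using par by (intro mult_left_mono) auto
    moreover have "0 \<le> (max (k - s) 0 * t) * r" using par r by simp
    moreover have "(k + \<Gamma>) * D = k * D + \<Gamma> * D" "k * (- D) = - (k * D)"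
      "\<Gamma> * t * (l3 - C1) = \<Gamma> * (t * (l3 - C1))" by (simp_all add: algebra_simps)
    ultimately show ?thesis unfolding eq using True by simp
  qed
qed

lemma lower_point:
  fixes f :: "real \<Rightarrow> real"
  assumes inc: "\<forall>r D. 0 \<le> r \<longrightarrow> r \<le> L \<longrightarrow> 0 \<le> D \<longrightarrow> D \<le> t * C1 \<longrightarrow> f (r + D) - f r \<le> k * D"
    and dec: "\<forall>r D. L \<le> r \<longrightarrow> 0 \<le> D \<longrightarrow> D \<le> t * r \<longrightarrow> f (r - D) - f r \<le> - (s * D)"
    and inc3: "\<forall>r D. 0 \<le> r \<longrightarrow> r \<le> l3 \<longrightarrow> 0 \<le> D \<longrightarrow> D \<le> t * C1 \<longrightarrow> f (r + D) - f r \<le> (s - \<Gamma>) * D"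
    and par: "l3 < L" "L < C0" "0 < t" "0 < \<Gamma>" "0 < C1"
    and r: "0 \<le> r" and pm: "C0 \<le> q" "q \<le> C1" and b: "0 \<le> b" "b \<le> t * r"
    and a: "a = (if r < L then t * q else 0)"
  shows "f (r - b + a) \<le> f r + s * (a - b) + 0 * r + (max (k - s) 0 * t * C1)
           - (\<Gamma> * t * (C0 - l3)) * (if r \<le> l3 then 1 else 0)"
proof (cases "r < L")
  case False
  then have a0: "a = 0" using a by simp
  have "f (r - b) - f r \<le> - (s * b)" using dec False b by auto
  moreover have "0 \<le> max (k - s) 0 * t * C1" using par by simp
  moreover have "\<not> r \<le> l3" using False par by simp
  ultimately show ?thesis using a0 by simp
next
  case True
  then have aa: "a = t * q" using a by simp
  define D where "D = t * q - b"
  have "t * r \<le> t * C0" using True par by (intro mult_left_mono) auto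
  moreover have "t * C0 \<le> t * q" using pm par by (intro mult_left_mono) auto
  ultimately have D0: "0 \<le> D" using b by (simp add: D_def)
  have "t * q \<le> t * C1" using pm par by (intro mult_left_mono) auto
  then have DC: "D \<le> t * C1" using b by (simp add: D_def)
  have eq: "r - b + a = r + D" "a - b = D" using aa by (auto simp: D_def)
  have dm: "(k - s) * D \<le> max (k - s) 0 * t * C1"
  proof -
    have "(k - s) * D \<le> max (k - s) 0 * D" using D0 by (intro mult_right_mono) auto
    also have "\<dots> \<le> max (k - s) 0 * (t * C1)" using DC by (intro mult_left_mono) auto
    finally show ?thesis by (simp add: algebra_simps)
  qed
  show ?thesis
  proof (cases "r \<le> l3")
    case False
    have "f (r + D) - f r \<le> k * D" using inc True D0 DC r by auto
    moreover have "(k - s) * D = k * D - s * D" by (simp_all add: algebra_simps)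
    ultimately show ?thesis unfolding eq using dm False by simp
  next
    case True
    have "f (r + D) - f r \<le> (s - \<Gamma>) * D" using inc3 True D0 DC r by auto
    moreover have "t * (C0 - l3) \<le> D"
    proof -
      have "t * (C0 - l3) \<le> t * (q - r)" using True pm par by (intro mult_left_mono) auto
      then show ?thesis using b by (simp add: D_def algebra_simps)
    qed
    then have "\<Gamma> * (t * (C0 - l3)) \<le> \<Gamma> * D" using par by (intro mult_left_mono) auto
    moreover have "0 \<le> max (k - s) 0 * t * C1" using par by simp
    moreover have "(s - \<Gamma>) * D = s * D - \<Gamma> * D"
      "\<Gamma> * t * (C0 - l3) = \<Gamma> * (t * (C0 - l3))" by (simp_all add: algebra_simps)
    ultimately show ?thesis unfolding eq using True by simp
  qed
qed



lemma level_up: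
  fixes \<rho> :: "'a \<Rightarrow> real"
  assumes sp: "space m = UNIV" and \<rho>: "\<rho> \<in> borel_measurable m" and nAE: "\<not> (AE x in m. \<rho> x \<le> C)"
  shows "\<exists>l3>C. emeasure m {x. l3 \<le> \<rho> x} \<noteq> 0"
proof (rule ccontr)
  assume "\<not> ?thesis"
  then have z: "emeasure m {x. C + inverse (real (Suc n)) \<le> \<rho> x} = 0" for n
    by (metis less_add_same_cancel1 positive_imp_inverse_positive of_nat_0_less_iff zero_less_Suc)
  have ms: "{x. C + inverse (real (Suc n)) \<le> \<rho> x} \<in> sets m" for n
  proof -
    have "{x. C + inverse (real (Suc n)) \<le> \<rho> x} = {x \<in> space m. C + inverse (real (Suc n)) \<le> \<rho> x}"
      using sp by simp
    also have "\<dots> \<in> sets m" using \<rho> by measurable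
    finally show ?thesis .
  qed
  have "(\<Union>n. {x. C + inverse (real (Suc n)) \<le> \<rho> x}) \<in> null_sets m"
    using z ms by (intro null_sets_UN) auto
  moreover have "{x \<in> space m. \<not> \<rho> x \<le> C} \<subseteq> (\<Union>n. {x. C + inverse (real (Suc n)) \<le> \<rho> x})"
  proof
    fix x assume "x \<in> {x \<in> space m. \<not> \<rho> x \<le> C}"
    then have "0 < \<rho> x - C" by simp
    then obtain n where "inverse (real (Suc n)) < \<rho> x - C" using reals_Archimedean by blast
    then have "C + inverse (real (Suc n)) \<le> \<rho> x" by simp
    then show "x \<in> (\<Union>n. {x. C + inverse (real (Suc n)) \<le> \<rho> x})" by blast
  qed
  ultimately have "AE x in m. \<rho> x \<le> C"
    by (intro AE_I'[of "\<Union>n. {x. C + inverse (real (Suc n)) \<le> \<rho> x}"]) auto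
  with nAE show False by simp
qed

lemma level_down:
  fixes \<rho> :: "'a \<Rightarrow> real"
  assumes sp: "space m = UNIV" and \<rho>: "\<rho> \<in> borel_measurable m" and nAE: "\<not> (AE x in m. C \<le> \<rho> x)"
    and C: "0 < C"
  shows "\<exists>l3>0. l3 < C \<and> emeasure m {x. \<rho> x \<le> l3} \<noteq> 0"
proof (rule ccontr)
  assume nt: "\<not> ?thesis"
  define l where "l n = C - C * inverse (real (Suc (Suc n)))" for n
  have l: "0 < l n" "l n < C" for n
  proof -
    have "inverse (real (Suc (Suc n))) < 1" by (simp add: inverse_less_1_iff)
    then have "C * inverse (real (Suc (Suc n))) < C * 1" using C by (intro mult_strict_left_mono) auto
    then show "0 < l n" by (simp add: l_def)
    have "0 < C * inverse (real (Suc (Suc n)))" using C by simp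
    then show "l n < C" by (simp add: l_def)
  qed
  have z: "emeasure m {x. \<rho> x \<le> l n} = 0" for n using nt l[of n] by blast
  have ms: "{x. \<rho> x \<le> l n} \<in> sets m" for n
  proof -
    have "{x. \<rho> x \<le> l n} = {x \<in> space m. \<rho> x \<le> l n}" using sp by simp
    also have "\<dots> \<in> sets m" using \<rho> by measurable
    finally show ?thesis .
  qed
  have "(\<Union>n. {x. \<rho> x \<le> l n}) \<in> null_sets m"
    using z ms by (intro null_sets_UN) auto
  moreover have "{x \<in> space m. \<not> C \<le> \<rho> x} \<subseteq> (\<Union>n. {x. \<rho> x \<le> l n})"
  proof
    fix x assume "x \<in> {x \<in> space m. \<not> C \<le> \<rho> x}"
    then have "0 < (C - \<rho> x) / C" using C by simp
    then obtain n where n: "inverse (real (Suc n)) < (C - \<rho> x) / C" using reals_Archimedean by blast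
    have "inverse (real (Suc (Suc n))) \<le> inverse (real (Suc n))" by (simp add: field_simps)
    with n have "inverse (real (Suc (Suc n))) < (C - \<rho> x) / C" by linarith
    then have "C * inverse (real (Suc (Suc n))) < C * ((C - \<rho> x) / C)"
      using C by (intro mult_strict_left_mono) auto
    then have "\<rho> x \<le> l n" using C by (simp add: l_def)
    then show "x \<in> (\<Union>n. {x. \<rho> x \<le> l n})" by auto
  qed
  ultimately have "AE x in m. C \<le> \<rho> x"
    by (intro AE_I'[of "\<Union>n. {x. \<rho> x \<le> l n}"]) auto
  with nAE show False by simp
qed

lemma distr_density_le_t:
  assumes w: "w \<in> borel_measurable \<pi>" "\<And>p. w p \<le> t" "0 \<le> t" and g: "g \<in> measurable \<pi> K" and X: "X \<in> sets K"
  shows "emeasure (distr (density \<pi> (\<lambda>p. ennreal (w p))) K g) X \<le> ennreal t * emeasure (distr \<pi> K g) X"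
proof -
  have g': "g \<in> measurable (density \<pi> (\<lambda>p. ennreal (w p))) K" using g by (simp cong: measurable_cong_sets)
  have Y: "g -` X \<inter> space \<pi> \<in> sets \<pi>" using g X by (rule measurable_sets)
  have "emeasure (density \<pi> (\<lambda>p. ennreal (w p))) (g -` X \<inter> space \<pi>)
      = (\<integral>\<^sup>+x. ennreal (w x) * indicator (g -` X \<inter> space \<pi>) x \<partial>\<pi>)"
    using w Y by (simp add: emeasure_density)
  also have "\<dots> \<le> (\<integral>\<^sup>+x. ennreal t * indicator (g -` X \<inter> space \<pi>) x \<partial>\<pi>)"
    using w by (intro nn_integral_mono) (auto split: split_indicator intro: ennreal_leI)
  also have "\<dots> = ennreal t * emeasure \<pi> (g -` X \<inter> space \<pi>)" using Y by (simp add: nn_integral_cmult_indicator)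
  finally show ?thesis using g g' X by (simp add: emeasure_distr)
qed

lemma emeasure_density_cmult:
  assumes \<rho>: "\<rho> \<in> borel_measurable M" "\<And>x. 0 \<le> \<rho> x" and t: "0 \<le> t" and X: "X \<in> sets M"
  shows "emeasure (density M (\<lambda>x. ennreal (t * \<rho> x))) X = ennreal t * emeasure (density M (\<lambda>x. ennreal (\<rho> x))) X"
proof -
  have "emeasure (density M (\<lambda>x. ennreal (t * \<rho> x))) X = (\<integral>\<^sup>+x. ennreal t * (ennreal (\<rho> x) * indicator X x) \<partial>M)"
    using \<rho> X t by (simp add: emeasure_density ennreal_mult mult.assoc)
  also have "\<dots> = ennreal t * (\<integral>\<^sup>+x. ennreal (\<rho> x) * indicator X x \<partial>M)"
    using \<rho> X by (intro nn_integral_cmult) auto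
  finally show ?thesis using \<rho> X by (simp add: emeasure_density)
qed



lemma upper_case:
  fixes c :: "'a::metric_space \<times> 'a \<Rightarrow> real"
    and f :: "real \<Rightarrow> real"
    and m \<mu> \<nu> :: "'a measure"
  assumes compact: "compact (UNIV :: 'a set)"
    and c_cont: "continuous_on UNIV c"
    and T_nonneg: "\<forall>\<mu>\<in>Mplus. \<forall>\<nu>\<in>Mplus. 0 \<le> OT_cost c \<mu> \<nu>"
    and T_diag: "\<forall>\<mu>\<in>Mplus. OT_cost c \<mu> \<mu> = 0"
    and f_entropy: "finite_entropy_function f"
    and f_strict: "strict_convex_on {0..} f"
    and m: "m \<in> Mplus"
    and \<mu>: "\<mu> \<in> Mplus"
    and \<nu>: "\<nu> \<in> Mplus"
    and \<nu>_min: "\<forall>\<nu>'\<in>Mplus. OT_cost c \<mu> \<nu> + enn2ereal (rel_entropy f m \<nu>)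
                          \<le> OT_cost c \<mu> \<nu>' + enn2ereal (rel_entropy f m \<nu>')"
    and \<mu>_ac: "absolutely_continuous m \<mu>"
    and \<rho>: "\<rho> \<in> borel_measurable borel" "\<And>x. 0 \<le> \<rho> x" "\<nu> = density m (\<lambda>x. ennreal (\<rho> x))"
    and \<rho>\<mu>: "\<rho>\<mu> \<in> borel_measurable borel" "\<And>x. 0 \<le> \<rho>\<mu> x" "\<mu> = density m (\<lambda>x. ennreal (\<rho>\<mu> x))"
    and bnd: "AE x in m. \<rho>\<mu> x \<le> C1" and C1: "0 < C1"
    and Hfin: "rel_entropy f m \<nu> \<noteq> \<infinity>"
    and Tfin: "OT_cost c \<mu> \<nu> < \<infinity>"
  shows "AE x in m. \<rho> x \<le> C1"
proof (rule ccontr)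
  assume nAE: "\<not> (AE x in m. \<rho> x \<le> C1)"
  have sm: "sets m = sets borel" and fm: "finite_measure m" using m by (auto simp: Mplus_def)
  interpret fm: finite_measure m by (rule fm)
  have sp_m: "space m = UNIV" using sets_eq_imp_space_eq[OF sm] by simp
  have \<rho>m: "\<rho> \<in> borel_measurable m" using \<rho>(1) sm by (simp cong: measurable_cong_sets)
  have \<rho>\<mu>m: "\<rho>\<mu> \<in> borel_measurable m" using \<rho>\<mu>(1) sm by (simp cong: measurable_cong_sets)
  have cvx: "convex_on {0..} f" using f_entropy by (simp add: finite_entropy_function_def)
  obtain l3 where l3: "C1 < l3" "emeasure m {x. l3 \<le> \<rho> x} \<noteq> 0"
    using level_up[OF sp_m \<rho>m nAE] by blast
  define S where "S = {x. l3 \<le> \<rho> x}"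
  have Sb: "S \<in> sets borel"
  proof -
    have "S = {x \<in> space borel. l3 \<le> \<rho> x}" by (simp add: S_def)
    also have "\<dots> \<in> sets borel" using \<rho>(1) by measurable
    finally show ?thesis .
  qed
  define mS where "mS = measure m S"
  have mS: "0 < mS"
  proof -
    have "emeasure m S = ennreal mS" unfolding mS_def by (simp add: fm.emeasure_eq_measure)
    then show ?thesis using l3(2) by (simp add: S_def mS_def zero_less_measure_iff)
  qed
  obtain \<Gamma> where \<Gamma>: "0 < \<Gamma>" and pk: "\<forall>\<eta>>0. \<exists>L t k s. C1 < L \<and> L < l3 \<and> 0 < t \<and> t < 1 \<and> k - s \<le> \<eta> \<and>
    (\<forall>r D. 0 \<le> r \<longrightarrow> r \<le> L \<longrightarrow> 0 \<le> D \<longrightarrow> D \<le> t * C1 \<longrightarrow> f (r + D) - f r \<le> k * D) \<and>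
    (\<forall>r D. L \<le> r \<longrightarrow> 0 \<le> D \<longrightarrow> D \<le> t * r \<longrightarrow> f (r - D) - f r \<le> - (s * D)) \<and>
    (\<forall>r D. l3 \<le> r \<longrightarrow> 0 \<le> D \<longrightarrow> D \<le> t * r \<longrightarrow> f (r - D) - f r \<le> - ((k + \<Gamma>) * D))"
    using upper_pkg[OF cvx f_strict C1 l3(1)] by blast
  define V where "V = integral\<^sup>L m \<rho>"
  have V0: "0 \<le> V" unfolding V_def using \<rho>(2) by (intro integral_nonneg_AE) auto
  define P where "P = \<Gamma> * (l3 - C1) * mS"
  have P: "0 < P" using \<Gamma> l3 mS by (simp add: P_def)
  define \<eta> where "\<eta> = P / (2 * (V + 1))"
  have \<eta>: "0 < \<eta>" using P V0 by (simp add: \<eta>_def)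
  obtain L t k s where Lt: "C1 < L" "L < l3" "0 < t" "t < 1" "k - s \<le> \<eta>"
    and inc: "\<forall>r D. 0 \<le> r \<longrightarrow> r \<le> L \<longrightarrow> 0 \<le> D \<longrightarrow> D \<le> t * C1 \<longrightarrow> f (r + D) - f r \<le> k * D"
    and dec: "\<forall>r D. L \<le> r \<longrightarrow> 0 \<le> D \<longrightarrow> D \<le> t * r \<longrightarrow> f (r - D) - f r \<le> - (s * D)"
    and dec3: "\<forall>r D. l3 \<le> r \<longrightarrow> 0 \<le> D \<longrightarrow> D \<le> t * r \<longrightarrow> f (r - D) - f r \<le> - ((k + \<Gamma>) * D)"
    using pk \<eta> by blast
  define A where "A = {x. L < \<rho> x}"
  have Ab: "A \<in> sets borel"
  proof -
    have "A = {x \<in> space borel. L < \<rho> x}" by (simp add: A_def)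
    also have "\<dots> \<in> sets borel" using \<rho>(1) by measurable
    finally show ?thesis .
  qed
  define w where "w p = t * indicator A (snd p)" for p :: "'a \<times> 'a"
  have wm: "w \<in> borel_measurable borel" unfolding w_def[abs_def] using Ab meas_snd by measurable
  have w01: "\<And>p. 0 \<le> w p" "\<And>p. w p \<le> 1" using Lt by (auto simp: w_def indicator_def)
  have delta: "(max (k - s) 0 * t) * integral\<^sup>L m \<rho> + 0 * measure m (space m) - (\<Gamma> * t * (l3 - C1)) * measure m S < 0"
  proof -
    have "max (k - s) 0 \<le> \<eta>" using Lt \<eta> by simp
    then have "max (k - s) 0 * (t * V) \<le> \<eta> * (t * V)" using Lt V0 by (intro mult_right_mono) auto
    also have "\<eta> * V \<le> P / 2"
    proof -
      have "\<eta> * V * (2 * (V + 1)) = P * V" using V0 by (simp add: \<eta>_def)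
      also have "\<dots> \<le> P * (V + 1)" using P by simp
      also have "P * (V + 1) = (P / 2) * (2 * (V + 1))" by simp
      finally have "\<eta> * V * (2 * (V + 1)) \<le> (P / 2) * (2 * (V + 1))" .
      moreover have "0 < 2 * (V + 1)" using V0 by simp
      ultimately show ?thesis by (meson mult_le_cancel_right_pos)
    qed
    then have "t * (\<eta> * V) \<le> t * (P / 2)" using Lt by (intro mult_left_mono) auto
    then have "\<eta> * (t * V) \<le> t * (P / 2)" by (simp add: algebra_simps)
    finally have "max (k - s) 0 * t * V \<le> t * (P / 2)" by (simp add: mult.assoc)
    moreover have "(\<Gamma> * t * (l3 - C1)) * mS = t * P" by (simp add: P_def)
    moreover have "t * (P / 2) < t * P" using Lt P by simp
    ultimately have "max (k - s) 0 * t * V < (\<Gamma> * t * (l3 - C1)) * mS" by linarith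
    then show ?thesis unfolding V_def mS_def by simp
  qed
  show False
  proof (rule G[OF compact c_cont T_nonneg T_diag f_entropy m \<mu> \<nu> \<nu>_min \<mu>_ac \<rho> Hfin Tfin wm w01 Sb delta])
    fix \<pi> a b
    assume \<pi>: "\<pi> \<in> couplings \<mu> \<nu>" and a: "a \<in> borel_measurable borel" "\<And>x. 0 \<le> a x"
      and b: "b \<in> borel_measurable borel" "\<And>x. 0 \<le> b x"
      and da: "distr (density \<pi> (\<lambda>p. ennreal (w p))) borel fst = density m (\<lambda>x. ennreal (a x))"
      and db: "distr (density \<pi> (\<lambda>p. ennreal (w p))) borel snd = density m (\<lambda>x. ennreal (b x))"
    have sp: "sets \<pi> = sets borel" and pmu: "distr \<pi> borel fst = \<mu>" and pnu: "distr \<pi> borel snd = \<nu>"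
      using \<pi> by (auto simp: couplings_def)
    have wpi: "w \<in> borel_measurable \<pi>" using wm sp by (simp cong: measurable_cong_sets)
    have sndp: "snd \<in> measurable \<pi> borel" and fstp: "fst \<in> measurable \<pi> borel"
      using meas_snd meas_fst sp by (auto cong: measurable_cong_sets)
    have am: "a \<in> borel_measurable m" and bm: "b \<in> borel_measurable m"
      using a b sm by (auto cong: measurable_cong_sets)
    have gA: "(\<lambda>y. ennreal (t * indicator A y)) \<in> borel_measurable borel" using Ab by measurable
    have "density m (\<lambda>x. ennreal (b x)) = density (distr \<pi> borel snd) (\<lambda>y. ennreal (t * indicator A y))"
      unfolding db[symmetric] w_def by (rule density_distr[OF gA sndp, symmetric])
    also have "\<dots> = density m (\<lambda>x. ennreal (\<rho> x) * ennreal (t * indicator A x))"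
      unfolding pnu \<rho>(3) using \<rho>m gA sm by (intro density_density_eq) (auto cong: measurable_cong_sets)
    also have "\<dots> = density m (\<lambda>x. ennreal (\<rho> x * (t * indicator A x)))"
      using \<rho>(2) Lt by (simp add: ennreal_mult)
    finally have "AE x in m. ennreal (b x) = ennreal (\<rho> x * (t * indicator A x))"
    proof (subst (asm) fm.density_unique_iff)
      have "(\<lambda>x. \<rho> x * (t * indicator A x)) \<in> borel_measurable borel" using \<rho>(1) Ab by measurable
      then show "(\<lambda>x. ennreal (\<rho> x * (t * indicator A x))) \<in> borel_measurable m"
        using sm by (simp cong: measurable_cong_sets)
    qed (use bm in auto)
    then have AEb: "AE x in m. b x = \<rho> x * (t * indicator A x)"
      by eventually_elim (use b(2) \<rho>(2) Lt in \<open>simp add: indicator_def\<close>)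
    have AEa: "AE x in m. a x \<le> t * \<rho>\<mu> x"
    proof (rule density_le_AE[OF am a(2)])
      show "(\<lambda>x. t * \<rho>\<mu> x) \<in> borel_measurable m" using \<rho>\<mu>m by simp
      show "\<And>x. 0 \<le> t * \<rho>\<mu> x" using \<rho>\<mu>(2) Lt by simp
      have "(\<integral>\<^sup>+x. ennreal (t * \<rho>\<mu> x) \<partial>m) = emeasure (density m (\<lambda>x. ennreal (t * \<rho>\<mu> x))) (space m)"
        using \<rho>\<mu>m by (simp add: emeasure_density)
      also have "\<dots> = ennreal t * emeasure \<mu> (space m)"
        unfolding \<rho>\<mu>(3) using \<rho>\<mu>m \<rho>\<mu>(2) Lt by (intro emeasure_density_cmult) auto
      also have "\<dots> < \<infinity>"
      proof -
        have "finite_measure \<mu>" "sets \<mu> = sets borel" using \<mu> by (auto simp: Mplus_def)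
        then have "emeasure \<mu> (space \<mu>) < \<infinity>" by (simp add: finite_measure.emeasure_finite less_top[symmetric])
        moreover have "space \<mu> = space m" using \<open>sets \<mu> = sets borel\<close> sm by (metis sets_eq_imp_space_eq)
        ultimately show ?thesis by (simp add: ennreal_mult_less_top)
      qed
      finally show "(\<integral>\<^sup>+x. ennreal (t * \<rho>\<mu> x) \<partial>m) \<noteq> \<infinity>" by simp
      fix X assume X: "X \<in> sets m"
      have "emeasure (density m (\<lambda>x. ennreal (a x))) X = emeasure (distr (density \<pi> (\<lambda>p. ennreal (w p))) borel fst) X"
        using da by simp
      also have "\<dots> \<le> ennreal t * emeasure (distr \<pi> borel fst) X"
        using X sm Lt by (intro distr_density_le_t[OF wpi _ _ fstp]) (auto simp: w_def indicator_def)
      also have "\<dots> = emeasure (density m (\<lambda>x. ennreal (t * \<rho>\<mu> x))) X"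
        unfolding pmu \<rho>\<mu>(3) using \<rho>\<mu>m \<rho>\<mu>(2) Lt X by (intro emeasure_density_cmult[symmetric]) auto
      finally show "emeasure (density m (\<lambda>x. ennreal (a x))) X \<le> emeasure (density m (\<lambda>x. ennreal (t * \<rho>\<mu> x))) X" .
    qed
    show "AE x in m. f (\<rho> x - b x + a x) \<le> f (\<rho> x) + k * (a x - b x) + (max (k - s) 0 * t) * \<rho> x + 0
           - (\<Gamma> * t * (l3 - C1)) * indicator S x"
      using AEa AEb bnd
    proof eventually_elim
      case (elim x)
      have "t * \<rho>\<mu> x \<le> t * C1" using elim Lt by (intro mult_left_mono) auto
      then have ax: "a x \<le> t * C1" using elim by linarith
      have bx: "b x = (if L < \<rho> x then t * \<rho> x else 0)" using elim by (simp add: A_def indicator_def)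
      have "indicator S x = (if l3 \<le> \<rho> x then 1 else (0::real))" by (simp add: S_def indicator_def)
      then show ?case
        using upper_point[OF inc dec dec3 Lt(1,2,3) \<Gamma> \<rho>(2)[of x] a(2)[of x] ax bx] by simp
    qed
  qed
qed



lemma lower_case:
  fixes c :: "'a::metric_space \<times> 'a \<Rightarrow> real"
    and f :: "real \<Rightarrow> real"
    and m \<mu> \<nu> :: "'a measure"
  assumes compact: "compact (UNIV :: 'a set)"
    and c_cont: "continuous_on UNIV c"
    and T_nonneg: "\<forall>\<mu>\<in>Mplus. \<forall>\<nu>\<in>Mplus. 0 \<le> OT_cost c \<mu> \<nu>"
    and T_diag: "\<forall>\<mu>\<in>Mplus. OT_cost c \<mu> \<mu> = 0"
    and f_entropy: "finite_entropy_function f"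
    and f_strict: "strict_convex_on {0..} f"
    and m: "m \<in> Mplus"
    and \<mu>: "\<mu> \<in> Mplus"
    and \<nu>: "\<nu> \<in> Mplus"
    and \<nu>_min: "\<forall>\<nu>'\<in>Mplus. OT_cost c \<mu> \<nu> + enn2ereal (rel_entropy f m \<nu>)
                          \<le> OT_cost c \<mu> \<nu>' + enn2ereal (rel_entropy f m \<nu>')"
    and \<mu>_ac: "absolutely_continuous m \<mu>"
    and \<rho>: "\<rho> \<in> borel_measurable borel" "\<And>x. 0 \<le> \<rho> x" "\<nu> = density m (\<lambda>x. ennreal (\<rho> x))"
    and \<rho>\<mu>: "\<rho>\<mu> \<in> borel_measurable borel" "\<And>x. 0 \<le> \<rho>\<mu> x" "\<mu> = density m (\<lambda>x. ennreal (\<rho>\<mu> x))"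
    and bnd: "AE x in m. C0 \<le> \<rho>\<mu> x \<and> \<rho>\<mu> x \<le> C1" and C1: "0 < C1" and C0: "0 < C0"
    and Hfin: "rel_entropy f m \<nu> \<noteq> \<infinity>"
    and Tfin: "OT_cost c \<mu> \<nu> < \<infinity>"
  shows "AE x in m. C0 \<le> \<rho> x"
proof (rule ccontr)
  assume nAE: "\<not> (AE x in m. C0 \<le> \<rho> x)"
  have sm: "sets m = sets borel" and fm: "finite_measure m" using m by (auto simp: Mplus_def)
  interpret fm: finite_measure m by (rule fm)
  have sp_m: "space m = UNIV" using sets_eq_imp_space_eq[OF sm] by simp
  have \<rho>m: "\<rho> \<in> borel_measurable m" using \<rho>(1) sm by (simp cong: measurable_cong_sets)
  have \<rho>\<mu>m: "\<rho>\<mu> \<in> borel_measurable m" using \<rho>\<mu>(1) sm by (simp cong: measurable_cong_sets)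
  have cvx: "convex_on {0..} f" using f_entropy by (simp add: finite_entropy_function_def)
  obtain l3 where l3: "0 < l3" "l3 < C0" "emeasure m {x. \<rho> x \<le> l3} \<noteq> 0"
    using level_down[OF sp_m \<rho>m nAE C0] by blast
  define S where "S = {x. \<rho> x \<le> l3}"
  have Sb: "S \<in> sets borel"
  proof -
    have "S = {x \<in> space borel. \<rho> x \<le> l3}" by (simp add: S_def)
    also have "\<dots> \<in> sets borel" using \<rho>(1) by measurable
    finally show ?thesis .
  qed
  define mS where "mS = measure m S"
  have mS: "0 < mS"
  proof -
    have "emeasure m S = ennreal mS" unfolding mS_def by (simp add: fm.emeasure_eq_measure)
    then show ?thesis using l3(3) by (simp add: S_def mS_def zero_less_measure_iff)
  qed
  obtain \<Gamma> where \<Gamma>: "0 < \<Gamma>" and pk: "\<forall>\<eta>>0. \<exists>L t k s. l3 < L \<and> L < C0 \<and> 0 < t \<and> t < 1 \<and> k - s \<le> \<eta> \<and>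
    (\<forall>r D. 0 \<le> r \<longrightarrow> r \<le> L \<longrightarrow> 0 \<le> D \<longrightarrow> D \<le> t * C1 \<longrightarrow> f (r + D) - f r \<le> k * D) \<and>
    (\<forall>r D. L \<le> r \<longrightarrow> 0 \<le> D \<longrightarrow> D \<le> t * r \<longrightarrow> f (r - D) - f r \<le> - (s * D)) \<and>
    (\<forall>r D. 0 \<le> r \<longrightarrow> r \<le> l3 \<longrightarrow> 0 \<le> D \<longrightarrow> D \<le> t * C1 \<longrightarrow> f (r + D) - f r \<le> (s - \<Gamma>) * D)"
    using lower_pkg[OF cvx f_strict l3(1,2) C1] by blast
  define V where "V = C1 * measure m (space m)"
  have V0: "0 \<le> V" unfolding V_def using C1 by simp
  define P where "P = \<Gamma> * (C0 - l3) * mS"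
  have P: "0 < P" using \<Gamma> l3 mS by (simp add: P_def)
  define \<eta> where "\<eta> = P / (2 * (V + 1))"
  have \<eta>: "0 < \<eta>" using P V0 by (simp add: \<eta>_def)
  obtain L t k s where Lt: "l3 < L" "L < C0" "0 < t" "t < 1" "k - s \<le> \<eta>"
    and inc: "\<forall>r D. 0 \<le> r \<longrightarrow> r \<le> L \<longrightarrow> 0 \<le> D \<longrightarrow> D \<le> t * C1 \<longrightarrow> f (r + D) - f r \<le> k * D"
    and dec: "\<forall>r D. L \<le> r \<longrightarrow> 0 \<le> D \<longrightarrow> D \<le> t * r \<longrightarrow> f (r - D) - f r \<le> - (s * D)"
    and inc3: "\<forall>r D. 0 \<le> r \<longrightarrow> r \<le> l3 \<longrightarrow> 0 \<le> D \<longrightarrow> D \<le> t * C1 \<longrightarrow> f (r + D) - f r \<le> (s - \<Gamma>) * D"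
    using pk \<eta> by blast
  define A where "A = {x. \<rho> x < L}"
  have Ab: "A \<in> sets borel"
  proof -
    have "A = {x \<in> space borel. \<rho> x < L}" by (simp add: A_def)
    also have "\<dots> \<in> sets borel" using \<rho>(1) by measurable
    finally show ?thesis .
  qed
  define w where "w p = t * indicator A (fst p)" for p :: "'a \<times> 'a"
  have wm: "w \<in> borel_measurable borel" unfolding w_def[abs_def] using Ab meas_fst by measurable
  have w01: "\<And>p. 0 \<le> w p" "\<And>p. w p \<le> 1" using Lt by (auto simp: w_def indicator_def)
  have delta: "0 * integral\<^sup>L m \<rho> + (max (k - s) 0 * t * C1) * measure m (space m) - (\<Gamma> * t * (C0 - l3)) * measure m S < 0"
  proof -
    have "max (k - s) 0 \<le> \<eta>" using Lt \<eta> by simp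
    then have "max (k - s) 0 * (t * V) \<le> \<eta> * (t * V)" using Lt V0 by (intro mult_right_mono) auto
    also have "\<eta> * V \<le> P / 2"
    proof -
      have "\<eta> * V * (2 * (V + 1)) = P * V" using V0 by (simp add: \<eta>_def)
      also have "\<dots> \<le> P * (V + 1)" using P by simp
      also have "P * (V + 1) = (P / 2) * (2 * (V + 1))" by simp
      finally have "\<eta> * V * (2 * (V + 1)) \<le> (P / 2) * (2 * (V + 1))" .
      moreover have "0 < 2 * (V + 1)" using V0 by simp
      ultimately show ?thesis by (meson mult_le_cancel_right_pos)
    qed
    then have "t * (\<eta> * V) \<le> t * (P / 2)" using Lt by (intro mult_left_mono) auto
    then have "\<eta> * (t * V) \<le> t * (P / 2)" by (simp add: algebra_simps)
    finally have "max (k - s) 0 * t * V \<le> t * (P / 2)" by (simp add: mult.assoc)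
    moreover have "(\<Gamma> * t * (C0 - l3)) * mS = t * P" by (simp add: P_def)
    moreover have "t * (P / 2) < t * P" using Lt P by simp
    ultimately have "max (k - s) 0 * t * V < (\<Gamma> * t * (C0 - l3)) * mS" by linarith
    then show ?thesis unfolding V_def mS_def by (simp add: algebra_simps)
  qed
  show False
  proof (rule G[OF compact c_cont T_nonneg T_diag f_entropy m \<mu> \<nu> \<nu>_min \<mu>_ac \<rho> Hfin Tfin wm w01 Sb delta])
    fix \<pi> a b
    assume \<pi>: "\<pi> \<in> couplings \<mu> \<nu>" and a: "a \<in> borel_measurable borel" "\<And>x. 0 \<le> a x"
      and b: "b \<in> borel_measurable borel" "\<And>x. 0 \<le> b x"
      and da: "distr (density \<pi> (\<lambda>p. ennreal (w p))) borel fst = density m (\<lambda>x. ennreal (a x))"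
      and db: "distr (density \<pi> (\<lambda>p. ennreal (w p))) borel snd = density m (\<lambda>x. ennreal (b x))"
    have sp: "sets \<pi> = sets borel" and pmu: "distr \<pi> borel fst = \<mu>" and pnu: "distr \<pi> borel snd = \<nu>"
      using \<pi> by (auto simp: couplings_def)
    have wpi: "w \<in> borel_measurable \<pi>" using wm sp by (simp cong: measurable_cong_sets)
    have sndp: "snd \<in> measurable \<pi> borel" and fstp: "fst \<in> measurable \<pi> borel"
      using meas_snd meas_fst sp by (auto cong: measurable_cong_sets)
    have am: "a \<in> borel_measurable m" and bm: "b \<in> borel_measurable m"
      using a b sm by (auto cong: measurable_cong_sets)
    have gA: "(\<lambda>y. ennreal (t * indicator A y)) \<in> borel_measurable borel" using Ab by measurable
    have "density m (\<lambda>x. ennreal (a x)) = density (distr \<pi> borel fst) (\<lambda>y. ennreal (t * indicator A y))"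
      unfolding da[symmetric] w_def by (rule density_distr[OF gA fstp, symmetric])
    also have "\<dots> = density m (\<lambda>x. ennreal (\<rho>\<mu> x) * ennreal (t * indicator A x))"
      unfolding pmu \<rho>\<mu>(3) using \<rho>\<mu>m gA sm by (intro density_density_eq) (auto cong: measurable_cong_sets)
    also have "\<dots> = density m (\<lambda>x. ennreal (\<rho>\<mu> x * (t * indicator A x)))"
      using \<rho>\<mu>(2) Lt by (simp add: ennreal_mult)
    finally have "AE x in m. ennreal (a x) = ennreal (\<rho>\<mu> x * (t * indicator A x))"
    proof (subst (asm) fm.density_unique_iff)
      have "(\<lambda>x. \<rho>\<mu> x * (t * indicator A x)) \<in> borel_measurable borel" using \<rho>\<mu>(1) Ab by measurable
      then show "(\<lambda>x. ennreal (\<rho>\<mu> x * (t * indicator A x))) \<in> borel_measurable m"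
        using sm by (simp cong: measurable_cong_sets)
    qed (use am in auto)
    then have AEa: "AE x in m. a x = \<rho>\<mu> x * (t * indicator A x)"
      by eventually_elim (use a(2) \<rho>\<mu>(2) Lt in \<open>simp add: indicator_def\<close>)
    have AEb: "AE x in m. b x \<le> t * \<rho> x"
    proof (rule density_le_AE[OF bm b(2)])
      show "(\<lambda>x. t * \<rho> x) \<in> borel_measurable m" using \<rho>m by simp
      show "\<And>x. 0 \<le> t * \<rho> x" using \<rho>(2) Lt by simp
      have "(\<integral>\<^sup>+x. ennreal (t * \<rho> x) \<partial>m) = emeasure (density m (\<lambda>x. ennreal (t * \<rho> x))) (space m)"
        using \<rho>m by (simp add: emeasure_density)
      also have "\<dots> = ennreal t * emeasure \<nu> (space m)"
        unfolding \<rho>(3) using \<rho>m \<rho>(2) Lt by (intro emeasure_density_cmult) auto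
      also have "\<dots> < \<infinity>"
      proof -
        have "finite_measure \<nu>" "sets \<nu> = sets borel" using \<nu> by (auto simp: Mplus_def)
        then have "emeasure \<nu> (space \<nu>) < \<infinity>" by (simp add: finite_measure.emeasure_finite less_top[symmetric])
        moreover have "space \<nu> = space m" using \<open>sets \<nu> = sets borel\<close> sm by (metis sets_eq_imp_space_eq)
        ultimately show ?thesis by (simp add: ennreal_mult_less_top)
      qed
      finally show "(\<integral>\<^sup>+x. ennreal (t * \<rho> x) \<partial>m) \<noteq> \<infinity>" by simp
      fix X assume X: "X \<in> sets m"
      have "emeasure (density m (\<lambda>x. ennreal (b x))) X = emeasure (distr (density \<pi> (\<lambda>p. ennreal (w p))) borel snd) X"
        using db by simp
      also have "\<dots> \<le> ennreal t * emeasure (distr \<pi> borel snd) X"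
        using X sm Lt by (intro distr_density_le_t[OF wpi _ _ sndp]) (auto simp: w_def indicator_def)
      also have "\<dots> = emeasure (density m (\<lambda>x. ennreal (t * \<rho> x))) X"
        unfolding pnu \<rho>(3) using \<rho>m \<rho>(2) Lt X by (intro emeasure_density_cmult[symmetric]) auto
      finally show "emeasure (density m (\<lambda>x. ennreal (b x))) X \<le> emeasure (density m (\<lambda>x. ennreal (t * \<rho> x))) X" .
    qed
    show "AE x in m. f (\<rho> x - b x + a x) \<le> f (\<rho> x) + s * (a x - b x) + 0 * \<rho> x + (max (k - s) 0 * t * C1)
           - (\<Gamma> * t * (C0 - l3)) * indicator S x"
      using AEa AEb bnd
    proof eventually_elim
      case (elim x)
      have ax: "a x = (if \<rho> x < L then t * \<rho>\<mu> x else 0)" using elim by (simp add: A_def indicator_def)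
      have "indicator S x = (if \<rho> x \<le> l3 then 1 else (0::real))" by (simp add: S_def indicator_def)
      then show ?case
        using lower_point[OF inc dec inc3 Lt(1,2,3) \<Gamma> C1 \<rho>(2)[of x] _ _ b(2)[of x] _ ax] elim by simp
    qed
  qed
qed



theorem corollary3p24:
  fixes c :: "'a::metric_space \<times> 'a \<Rightarrow> real"
    and f :: "real \<Rightarrow> real"
    and m \<mu> \<nu> :: "'a measure"
    and C0 C1 :: real
  assumes compact: "compact (UNIV :: 'a set)"
    and c_cont: "continuous_on UNIV c"
    and T_nonneg: "\<forall>\<mu>\<in>Mplus. \<forall>\<nu>\<in>Mplus. 0 \<le> OT_cost c \<mu> \<nu>"
    and T_diag: "\<forall>\<mu>\<in>Mplus. OT_cost c \<mu> \<mu> = 0"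
    and f_entropy: "finite_entropy_function f"
    and f_strict: "strict_convex_on {0..} f"
    and m: "m \<in> Mplus" "emeasure m UNIV \<noteq> 0"
    and \<mu>: "\<mu> \<in> Mplus"
    and \<nu>: "\<nu> \<in> Mplus"
    and \<nu>_min: "\<forall>\<nu>'\<in>Mplus. OT_cost c \<mu> \<nu> + enn2ereal (rel_entropy f m \<nu>)
                          \<le> OT_cost c \<mu> \<nu>' + enn2ereal (rel_entropy f m \<nu>')"
    and C: "0 < C0" "0 < C1"
    and \<mu>_ac: "absolutely_continuous m \<mu>"
    and \<mu>_bounds: "AE x in m. ennreal C0 \<le> RN_deriv m \<mu> x \<and> RN_deriv m \<mu> x \<le> ennreal C1"
  shows "absolutely_continuous m \<nu> \<and>
         (AE x in m. ennreal C0 \<le> RN_deriv m \<nu> x \<and> RN_deriv m \<nu> x \<le> ennreal C1)"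
proof -
  have sm: "sets m = sets borel" and fm: "finite_measure m" using m by (auto simp: Mplus_def)
  interpret fm: finite_measure m by (rule fm)
  have sp_m: "space m = UNIV" using sets_eq_imp_space_eq[OF sm] by simp
  obtain \<rho>\<mu> where \<rho>\<mu>: "\<rho>\<mu> \<in> borel_measurable borel" "\<And>x. 0 \<le> \<rho>\<mu> x" "\<mu> = density m (\<lambda>x. ennreal (\<rho>\<mu> x))"
    and RN\<mu>: "AE x in m. RN_deriv m \<mu> x = ennreal (\<rho>\<mu> x)"
    using L_rep[OF m(1) \<mu> \<mu>_ac] by auto
  have \<rho>\<mu>m: "\<rho>\<mu> \<in> borel_measurable m" using \<rho>\<mu>(1) sm by (simp cong: measurable_cong_sets)
  have bnd: "AE x in m. C0 \<le> \<rho>\<mu> x \<and> \<rho>\<mu> x \<le> C1"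
    using \<mu>_bounds RN\<mu> by eventually_elim (use \<rho>\<mu>(2) C in auto)
  have "compact (f ` {C0..C1})"
    using f_cont[OF f_entropy] C by (intro compact_continuous_image) (auto elim: continuous_on_subset)
  then obtain K where K: "\<And>y. y \<in> {C0..C1} \<Longrightarrow> norm (f y) \<le> K"
    using compact_imp_bounded[of "f ` {C0..C1}"] unfolding bounded_iff by (metis atLeastAtMost_iff image_eqI)
  have H\<mu>: "rel_entropy f m \<mu> = (\<integral>\<^sup>+x. ennreal (f (\<rho>\<mu> x)) \<partial>m)"
    unfolding \<rho>\<mu>(3) using \<rho>\<mu>m \<rho>\<mu>(2) by (intro rel_entropy_density) (auto intro: fm.sigma_finite_measure_axioms)
  also have "\<dots> \<le> (\<integral>\<^sup>+x. ennreal K \<partial>m)"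
  proof (rule nn_integral_mono_AE)
    show "AE x in m. ennreal (f (\<rho>\<mu> x)) \<le> ennreal K"
      using bnd
    proof eventually_elim
      case (elim x)
      then have "norm (f (\<rho>\<mu> x)) \<le> K" by (intro K) auto
      then show ?case by (intro ennreal_leI) auto
    qed
  qed
  also have "\<dots> = ennreal K * emeasure m (space m)" by simp
  also have "\<dots> < \<infinity>"
    using fm.emeasure_finite[of "space m"] by (simp add: ennreal_mult_eq_top_iff less_top[symmetric])
  finally have H\<mu>fin: "rel_entropy f m \<mu> < \<infinity>" .
  have "OT_cost c \<mu> \<nu> + enn2ereal (rel_entropy f m \<nu>) \<le> OT_cost c \<mu> \<mu> + enn2ereal (rel_entropy f m \<mu>)"
    using \<nu>_min \<mu> by blast
  also have "\<dots> = enn2ereal (rel_entropy f m \<mu>)" using T_diag \<mu> by simp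
  also have "\<dots> < \<infinity>" using H\<mu>fin by (simp add: less_top[symmetric])
  finally have J: "OT_cost c \<mu> \<nu> + enn2ereal (rel_entropy f m \<nu>) < \<infinity>" .
  have T0: "0 \<le> OT_cost c \<mu> \<nu>" using T_nonneg \<mu> \<nu> by blast
  have Tfin: "OT_cost c \<mu> \<nu> < \<infinity>" and Hfin': "enn2ereal (rel_entropy f m \<nu>) < \<infinity>"
    using J T0 enn2ereal_nonneg[of "rel_entropy f m \<nu>"]
    by (cases "OT_cost c \<mu> \<nu>"; cases "enn2ereal (rel_entropy f m \<nu>)"; auto)+
  have Hfin: "rel_entropy f m \<nu> \<noteq> \<infinity>" using Hfin' by auto
  have \<nu>_ac: "absolutely_continuous m \<nu>"
    using Hfin unfolding rel_entropy_def by (auto split: if_splits)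
  obtain \<rho> where \<rho>: "\<rho> \<in> borel_measurable borel" "\<And>x. 0 \<le> \<rho> x" "\<nu> = density m (\<lambda>x. ennreal (\<rho> x))"
    and RN\<nu>: "AE x in m. RN_deriv m \<nu> x = ennreal (\<rho> x)"
    using L_rep[OF m(1) \<nu> \<nu>_ac] by auto
  have bnd1: "AE x in m. \<rho>\<mu> x \<le> C1" using bnd by eventually_elim auto
  have up: "AE x in m. \<rho> x \<le> C1"
    by (rule upper_case[OF compact c_cont T_nonneg T_diag f_entropy f_strict m(1) \<mu> \<nu> \<nu>_min \<mu>_ac
          \<rho> \<rho>\<mu> bnd1 C(2) Hfin Tfin])
  have low: "AE x in m. C0 \<le> \<rho> x"
    by (rule lower_case[OF compact c_cont T_nonneg T_diag f_entropy f_strict m(1) \<mu> \<nu> \<nu>_min \<mu>_ac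
          \<rho> \<rho>\<mu> bnd C(2) C(1) Hfin Tfin])
  have "AE x in m. ennreal C0 \<le> RN_deriv m \<nu> x \<and> RN_deriv m \<nu> x \<le> ennreal C1"
    using up low RN\<nu> by eventually_elim (auto intro: ennreal_leI)
  with \<nu>_ac show ?thesis by simp
qed


end
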